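(* Let $n\ge4$ be even. There exists a quantum query algorithm making exactly 2 queries to the oracle $O_x$ such that, for every $x\in\{0,1\}^n$ with $|x|=n/2$, the algorithm outputs $1$ with probability $1$, and for every $x\in\{0,1\}^n$ with $|x|\in\{0,1,n-1,n\}$, the algorithm outputs $0$ with probability $1$.
   Context: $|x|$ denotes the Hamming weight of a bit string $x$. Quantum query model: a $t$-query quantum query algorithm on inputs $x\in\{0,1\}^n$ acts on a Hilbert space $\mathcal H_{\rm in}\otimes\mathcal H_{\rm work}\otimes\mathcal H_{\rm out}$, where $\mathcal H_{\rm in}$ has orthonormal basis $|0\rangle,\dots,|n\rangle$, $\mathcal H_{\rm work}$ is a finite-dimensional workspace of arbitrary size, and $\mathcal H_{\rm out}$ is one qubit. It is specified by input-independent unitaries $U_0,\dots,U_t$, and on input $x$ produces the state $U_tO_xU_{t-1}O_x\cdots O_xU_0|0\rangle$ ($t$ applications of $O_x$), where the oracle $O_x$ acts on $\mathcal H_{\rm in}$ by $|i\rangle\mapsto(-1)^{x_i}|i\rangle$ with the convention $x_0=0$ (and as the identity on the other registers). The output is obtained by measuring $\mathcal H_{\rm out}$ in the computational basis. *)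

theory Defs
  imports Complex_Main
begin

text \<open>Quantum query model on H_in (x) H_work (x) H_out, with
  H_in having basis |0>,...,|n>, H_work of dimension m (m >= 1), H_out a qubit.
  Basis vector |i,w,b> is encoded as the index (i*m + w)*2 + b,
  so the total dimension is (n+1)*m*2.  Operators are matrices
  nat => nat => complex (row, column), vectors are nat => complex,
  both only meaningful on indices below the dimension.\<close>

definition qdim :: "nat \<Rightarrow> nat \<Rightarrow> nat" where
  "qdim n m = (n + 1) * m * 2"

definition in_index :: "nat \<Rightarrow> nat \<Rightarrow> nat" where
  "in_index m k = k div (2 * m)"

definition out_bit :: "nat \<Rightarrow> nat" where
  "out_bit k = k mod 2"

definition unitary_op :: "nat \<Rightarrow> (nat \<Rightarrow> nat \<Rightarrow> complex) \<Rightarrow> bool" where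
  "unitary_op N U \<longleftrightarrow>
     (\<forall>j<N. \<forall>k<N. (\<Sum>l<N. cnj (U l j) * U l k) = (if j = k then 1 else 0))"

definition apply_op :: "nat \<Rightarrow> (nat \<Rightarrow> nat \<Rightarrow> complex) \<Rightarrow> (nat \<Rightarrow> complex) \<Rightarrow> (nat \<Rightarrow> complex)" where
  "apply_op N U v = (\<lambda>r. if r < N then (\<Sum>c<N. U r c * v c) else 0)"

text \<open>Input bits x_1..x_n are the list entries x!0..x!(n-1); x_0 = 0.\<close>
definition xbit :: "bool list \<Rightarrow> nat \<Rightarrow> bool" where
  "xbit x i = (if i = 0 then False else x ! (i - 1))"

definition query_op :: "nat \<Rightarrow> nat \<Rightarrow> bool list \<Rightarrow> (nat \<Rightarrow> complex) \<Rightarrow> (nat \<Rightarrow> complex)" where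
  "query_op n m x v = (\<lambda>k. if k < qdim n m then
       (if xbit x (in_index m k) then - v k else v k) else 0)"

definition init_state :: "nat \<Rightarrow> complex" where
  "init_state = (\<lambda>k. if k = 0 then 1 else 0)"

text \<open>Final state U_t O_x U_{t-1} ... O_x U_0 |0>, where Us = [U_1,...,U_t].\<close>
definition final_state :: "nat \<Rightarrow> nat \<Rightarrow> bool list \<Rightarrow> (nat \<Rightarrow> nat \<Rightarrow> complex)
    \<Rightarrow> (nat \<Rightarrow> nat \<Rightarrow> complex) list \<Rightarrow> (nat \<Rightarrow> complex)" where
  "final_state n m x U0 Us =
     fold (\<lambda>U v. apply_op (qdim n m) U (query_op n m x v)) Us
          (apply_op (qdim n m) U0 init_state)"

definition prob_output :: "nat \<Rightarrow> nat \<Rightarrow> bool list \<Rightarrow> (nat \<Rightarrow> nat \<Rightarrow> complex)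
    \<Rightarrow> (nat \<Rightarrow> nat \<Rightarrow> complex) list \<Rightarrow> nat \<Rightarrow> real" where
  "prob_output n m x U0 Us b =
     (\<Sum>k | k < qdim n m \<and> out_bit k = b. (cmod (final_state n m x U0 Us k))\<^sup>2)"

definition hamming_weight :: "bool list \<Rightarrow> nat" where
  "hamming_weight x = length (filter id x)"

end

theory Submission
  imports Defs
begin

definition rapp :: "nat \<Rightarrow> (nat \<Rightarrow> nat \<Rightarrow> real) \<Rightarrow> (nat \<Rightarrow> real) \<Rightarrow> nat \<Rightarrow> real" where
  "rapp N A v = (\<lambda>r. if r < N then (\<Sum>c<N. A r c * v c) else 0)"

definition runit :: "nat \<Rightarrow> (nat \<Rightarrow> nat \<Rightarrow> real) \<Rightarrow> bool" where
  "runit N A \<longleftrightarrow> (\<forall>j<N. \<forall>k<N. (\<Sum>l<N. A l j * A l k) = (if j = k then 1 else 0))"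

definition ip :: "nat \<Rightarrow> (nat \<Rightarrow> real) \<Rightarrow> (nat \<Rightarrow> real) \<Rightarrow> real" where
  "ip N u v = (\<Sum>c<N. u c * v c)"

definition reflm :: "nat \<Rightarrow> 'k set \<Rightarrow> ('k \<Rightarrow> nat \<Rightarrow> real) \<Rightarrow> ('k \<Rightarrow> 'k \<Rightarrow> real) \<Rightarrow> nat \<Rightarrow> nat \<Rightarrow> real" where
  "reflm N K f H = (\<lambda>r c. (if r = c then 1 else 0) - 2 * (\<Sum>k\<in>K. \<Sum>l\<in>K. f k r * H k l * f l c))"

definition rmul :: "nat \<Rightarrow> (nat \<Rightarrow> nat \<Rightarrow> real) \<Rightarrow> (nat \<Rightarrow> nat \<Rightarrow> real) \<Rightarrow> nat \<Rightarrow> nat \<Rightarrow> real" where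
  "rmul N A B = (\<lambda>r c. \<Sum>l<N. A r l * B l c)"

lemma rapp_refl:
  assumes "r < N"
  shows "rapp N (reflm N K f H) v r = v r - 2 * (\<Sum>k\<in>K. \<Sum>l\<in>K. f k r * H k l * ip N (f l) v)"
proof -
  have e: "reflm N K f H r c * v c = (if r = c then v c else 0) - 2 * ((\<Sum>k\<in>K. \<Sum>l\<in>K. f k r * H k l * f l c) * v c)" for c
    unfolding reflm_def by (simp add: left_diff_distrib)
  have "(\<Sum>c<N. reflm N K f H r c * v c) = (\<Sum>c<N. (if r = c then v c else 0)) - 2 * (\<Sum>c<N. (\<Sum>k\<in>K. \<Sum>l\<in>K. f k r * H k l * f l c) * v c)"
    unfolding e by (simp add: sum_subtractf sum_distrib_left)
  also have "(\<Sum>c<N. (if r = c then v c else 0)) = v r" using assms by (simp add: sum.delta)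
  also have "(\<Sum>c<N. (\<Sum>k\<in>K. \<Sum>l\<in>K. f k r * H k l * f l c) * v c) = (\<Sum>k\<in>K. \<Sum>l\<in>K. f k r * H k l * ip N (f l) v)"
    unfolding ip_def by (simp add: sum_distrib_left sum_distrib_right mult.assoc sum.swap[of _ "{..<N}"])
  finally show ?thesis using assms unfolding rapp_def by simp
qed

lemma refl_unit:
  fixes f :: "'k \<Rightarrow> nat \<Rightarrow> real"
  assumes fin: "finite K" and Hs: "\<And>k l. k \<in> K \<Longrightarrow> l \<in> K \<Longrightarrow> H k l = H l k"
    and fxd: "\<And>j r. j \<in> K \<Longrightarrow> r < N \<Longrightarrow> (\<Sum>k\<in>K. \<Sum>l\<in>K. f k r * H k l * ip N (f l) (f j)) = f j r"
  shows "runit N (reflm N K f H)"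
proof -
  define Q where "Q = (\<lambda>r c. \<Sum>k\<in>K. \<Sum>l\<in>K. f k r * H k l * f l c)"
  have Qs: "Q r c = Q c r" for r c
  proof -
    have "Q r c = (\<Sum>l\<in>K. \<Sum>k\<in>K. f k r * H k l * f l c)" unfolding Q_def by (rule sum.swap)
    also have "\<dots> = Q c r" unfolding Q_def
      by (intro sum.cong refl) (simp add: Hs mult.commute mult.left_commute)
    finally show ?thesis .
  qed
  have fQ: "(\<Sum>l<N. f j l * Q l k) = f j k" if "j \<in> K" "k < N" for j k
  proof -
    have "(\<Sum>l<N. f j l * Q l k) = (\<Sum>l<N. Q k l * f j l)" by (simp add: Qs mult.commute)
    also have "\<dots> = (\<Sum>k1\<in>K. \<Sum>l1\<in>K. f k1 k * H k1 l1 * ip N (f l1) (f j))"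
      unfolding Q_def ip_def
      by (simp add: sum_distrib_left sum_distrib_right mult.assoc sum.swap[of _ "{..<N}"])
    also have "\<dots> = f j k" using fxd that by simp
    finally show ?thesis .
  qed
  have Qa: "Q j l = (\<Sum>k1\<in>K. \<Sum>l1\<in>K. f k1 j * H k1 l1 * f l1 l)" for j l by (simp add: Q_def)
  have QQ: "(\<Sum>l<N. Q j l * Q l k) = Q j k" if "k < N" for j k
  proof -
    have "(\<Sum>l<N. Q j l * Q l k) = (\<Sum>k1\<in>K. \<Sum>l1\<in>K. f k1 j * H k1 l1 * (\<Sum>l<N. f l1 l * Q l k))"
      unfolding Qa[of j]
      by (simp add: sum_distrib_left sum_distrib_right mult.assoc sum.swap[of _ "{..<N}"])
    also have "\<dots> = Q j k" unfolding Qa[of j k] using fQ[OF _ that] by simp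
    finally show ?thesis .
  qed
  have R: "reflm N K f H = (\<lambda>r c. (if r = c then 1 else 0) - 2 * Q r c)"
    unfolding reflm_def Q_def by simp
  show ?thesis unfolding runit_def R
  proof (intro allI impI)
    fix j k assume j: "j < N" and k: "k < N"
    have e: "((if l = j then 1 else 0) - 2 * Q l j) * ((if l = k then 1 else 0) - 2 * Q l k)
      = (if l = j \<and> l = k then 1 else 0) - (if l = j then 2 * Q j k else 0)
        - (if l = k then 2 * Q j k else 0) + 4 * (Q j l * Q l k)" for l
      using Qs[of k j] by (simp add: algebra_simps Qs[of l j])
    have s1: "(\<Sum>l<N. (if l = j \<and> l = k then 1 else 0)) = (if j = k then 1 else (0::real))"
      using j by (cases "j = k") (simp_all add: sum.delta, auto intro!: sum.neutral)
    have s2: "(\<Sum>l<N. (if l = j then 2 * Q j k else 0)) = 2 * Q j k" using j by (simp add: sum.delta)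
    have s3: "(\<Sum>l<N. (if l = k then 2 * Q j k else 0)) = 2 * Q j k" using k by (simp add: sum.delta)
    have s4: "(\<Sum>l<N. 4 * (Q j l * Q l k)) = 4 * Q j k" using QQ[OF k] by (simp add: sum_distrib_left[symmetric])
    show "(\<Sum>l<N. ((if l = j then 1 else 0) - 2 * Q l j) * ((if l = k then 1 else 0) - 2 * Q l k)) = (if j = k then 1 else 0)"
      unfolding e sum.distrib sum_subtractf s1 s2 s3 s4 by simp
  qed
qed

lemma sum3_swap:
  "(\<Sum>r\<in>R. \<Sum>c\<in>C. \<Sum>d\<in>D. g r c d) = (\<Sum>c\<in>C. \<Sum>d\<in>D. \<Sum>r\<in>R. g r c d)"
  by (simp add: sum.swap[of _ R])

lemma runit_norm:
  assumes "runit N A"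
  shows "(\<Sum>r<N. (rapp N A v r)^2) = (\<Sum>c<N. (v c)^2)"
proof -
  have "(\<Sum>r<N. (rapp N A v r)^2) = (\<Sum>r<N. \<Sum>c<N. \<Sum>d<N. (A r c * v c) * (A r d * v d))"
    unfolding rapp_def power2_eq_square by (simp add: sum_product)
  also have "\<dots> = (\<Sum>c<N. \<Sum>d<N. \<Sum>r<N. (A r c * v c) * (A r d * v d))" by (rule sum3_swap)
  also have "\<dots> = (\<Sum>c<N. \<Sum>d<N. v c * v d * (\<Sum>r<N. A r c * A r d))"
    by (simp add: sum_distrib_left mult.commute mult.left_commute)
  also have "\<dots> = (\<Sum>c<N. \<Sum>d<N. v c * v d * (if c = d then 1 else 0))"
    using assms unfolding runit_def by (intro sum.cong refl) simp
  also have "\<dots> = (\<Sum>c<N. v c * v c)" by (simp add: if_distrib sum.delta cong: if_cong)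
  finally show ?thesis by (simp add: power2_eq_square)
qed

lemma rmul_unit:
  assumes "runit N A" "runit N B"
  shows "runit N (rmul N A B)"
  unfolding runit_def
proof (intro allI impI)
  fix j k assume j: "j < N" and k: "k < N"
  have "(\<Sum>l<N. rmul N A B l j * rmul N A B l k) = (\<Sum>l<N. \<Sum>p<N. \<Sum>q<N. (A l p * B p j) * (A l q * B q k))"
    unfolding rmul_def by (simp add: sum_product)
  also have "\<dots> = (\<Sum>p<N. \<Sum>q<N. \<Sum>l<N. (A l p * B p j) * (A l q * B q k))" by (rule sum3_swap)
  also have "\<dots> = (\<Sum>p<N. \<Sum>q<N. B p j * B q k * (\<Sum>l<N. A l p * A l q))"
    by (simp add: sum_distrib_left mult.commute mult.left_commute)
  also have "\<dots> = (\<Sum>p<N. \<Sum>q<N. B p j * B q k * (if p = q then 1 else 0))"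
    using assms(1) unfolding runit_def by (intro sum.cong refl) simp
  also have "\<dots> = (\<Sum>p<N. B p j * B p k)" by (simp add: if_distrib sum.delta cong: if_cong)
  also have "\<dots> = (if j = k then 1 else 0)" using assms(2) j k unfolding runit_def by simp
  finally show "(\<Sum>l<N. rmul N A B l j * rmul N A B l k) = (if j = k then 1 else 0)" .
qed

lemma rapp_rmul: "rapp N (rmul N A B) v = rapp N A (rapp N B v)"
proof (rule ext)
  fix r
  have "(\<Sum>c<N. (\<Sum>l<N. A r l * B l c) * v c) = (\<Sum>c<N. \<Sum>l<N. A r l * (B l c * v c))"
    by (simp add: sum_distrib_right mult.assoc)
  also have "\<dots> = (\<Sum>l<N. \<Sum>c<N. A r l * (B l c * v c))" by (rule sum.swap)
  also have "\<dots> = (\<Sum>l<N. A r l * (\<Sum>c<N. B l c * v c))" by (simp add: sum_distrib_left)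
  finally have "(\<Sum>c<N. (\<Sum>l<N. A r l * B l c) * v c) = (\<Sum>l<N. A r l * (\<Sum>c<N. B l c * v c))" .
  then show "rapp N (rmul N A B) v r = rapp N A (rapp N B v) r"
    unfolding rapp_def rmul_def by (auto intro!: sum.cong)
qed

lemma sum_split_mult: "(\<Sum>k<a*b. g k) = (\<Sum>q<a. \<Sum>r<b. g (q*b + r))" for g :: "nat \<Rightarrow> 'a::comm_monoid_add"
proof -
  have "(\<Sum>k<a*b. g k) = (\<Sum>q<a. sum g {q*b..<q*b+b})" by (rule sum.nat_group[symmetric])
  also have "\<dots> = (\<Sum>q<a. \<Sum>r<b. g (q*b + r))"
  proof (rule sum.cong[OF refl])
    fix q
    have "sum g {q*b..<q*b+b} = sum g {0+q*b..<b+q*b}" by (simp add: add.commute)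
    also have "\<dots> = (\<Sum>r\<in>{0..<b}. g (r + q*b))" by (rule sum.shift_bounds_nat_ivl)
    also have "\<dots> = (\<Sum>r<b. g (q*b + r))" by (simp add: atLeast0LessThan add.commute)
    finally show "sum g {q*b..<q*b+b} = (\<Sum>r<b. g (q*b + r))" .
  qed
  finally show ?thesis .
qed

lemma dm_aux:
  fixes x c d :: nat assumes "c < d"
  shows "(x * d + c) div d = x" "(x * d + c) mod d = c"
proof -
  have d: "0 < d" using assms by simp
  show "(x * d + c) div d = x" using assms d by (simp add: div_add1_eq)
  show "(x * d + c) mod d = c" using assms by simp
qed

lemma div3_aux:
  fixes x d :: nat assumes "x < d * d * d"
  shows "x div d div d < d"
proof -
  have "x div d div d = x div (d * d)" by (simp add: div_mult2_eq)
  also have "\<dots> < d" using assms by (simp add: less_mult_imp_div_less mult.commute)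
  finally show ?thesis .
qed

locale alg = fixes n :: nat assumes n4: "4 \<le> n"
begin

abbreviation "n1 \<equiv> Suc n"
definition "mm = n1 * n1 * n1"
definition "NN = qdim n mm"
definition enc :: "nat \<Rightarrow> nat \<Rightarrow> nat \<Rightarrow> nat \<Rightarrow> nat \<Rightarrow> nat" where
  "enc i a b c ob = (i * mm + ((a * n1 + b) * n1 + c)) * 2 + ob"

definition "dI k = in_index mm k"
definition "dO k = out_bit k"
definition "dA k = (k div 2) mod mm div n1 div n1"
definition "dB k = (k div 2) mod mm div n1 mod n1"
definition "dC k = (k div 2) mod mm mod n1"

lemma NN_eq: "NN = (n1 * mm) * 2" unfolding NN_def qdim_def by simp

lemma sum_labels:
  "(\<Sum>k<NN. g k) = (\<Sum>i<n1. \<Sum>a<n1. \<Sum>b<n1. \<Sum>c<n1. \<Sum>ob<2. g (enc i a b c ob))"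
proof -
  have "(\<Sum>k<NN. g k) = (\<Sum>t<n1*mm. \<Sum>ob<2. g (t*2 + ob))" unfolding NN_eq by (rule sum_split_mult)
  also have "\<dots> = (\<Sum>i<n1. \<Sum>w<mm. \<Sum>ob<2. g ((i*mm + w)*2 + ob))" by (rule sum_split_mult)
  also have "\<dots> = (\<Sum>i<n1. \<Sum>t<n1*n1. \<Sum>c<n1. \<Sum>ob<2. g ((i*mm + (t*n1 + c))*2 + ob))"
    unfolding mm_def by (subst sum_split_mult) (rule refl)
  also have "\<dots> = (\<Sum>i<n1. \<Sum>a<n1. \<Sum>b<n1. \<Sum>c<n1. \<Sum>ob<2. g ((i*mm + ((a*n1 + b)*n1 + c))*2 + ob))"
    by (subst sum_split_mult) (rule refl)
  finally show ?thesis unfolding enc_def .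
qed

lemma mm_pos: "0 < mm" unfolding mm_def by simp

lemma w_lt: "a < n1 \<Longrightarrow> b < n1 \<Longrightarrow> c < n1 \<Longrightarrow> (a * n1 + b) * n1 + c < mm"
proof -
  assume a: "a < n1" and b: "b < n1" and c: "c < n1"
  have "a * n1 + b < n1 * n1"
  proof -
    have "a * n1 + b < a * n1 + n1" using b by simp
    also have "\<dots> = (a+1) * n1" by simp
    also have "\<dots> \<le> n1 * n1" using a by (intro mult_right_mono) auto
    finally show ?thesis .
  qed
  then have "a * n1 + b + 1 \<le> n1 * n1" by simp
  then have "(a * n1 + b + 1) * n1 \<le> n1 * n1 * n1" by (intro mult_right_mono) auto
  then show ?thesis using c unfolding mm_def by (simp add: algebra_simps)
qed

lemma enc_lt: "i < n1 \<Longrightarrow> a < n1 \<Longrightarrow> b < n1 \<Longrightarrow> c < n1 \<Longrightarrow> ob < 2 \<Longrightarrow> enc i a b c ob < NN"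
proof -
  assume i: "i < n1" and abc: "a < n1" "b < n1" "c < n1" and ob: "ob < 2"
  have w: "(a * n1 + b) * n1 + c < mm" using w_lt abc by blast
  have "i * mm + ((a * n1 + b) * n1 + c) < (i+1) * mm" using w by simp
  also have "\<dots> \<le> n1 * mm" using i by (intro mult_right_mono) auto
  finally have "i * mm + ((a * n1 + b) * n1 + c) + 1 \<le> n1 * mm" by simp
  then have "(i * mm + ((a * n1 + b) * n1 + c) + 1) * 2 \<le> n1 * mm * 2" by simp
  then show ?thesis using ob unfolding enc_def NN_eq by simp
qed

lemma dec_enc:
  assumes "i < n1" "a < n1" "b < n1" "c < n1" "ob < 2"
  shows "dI (enc i a b c ob) = i" "dA (enc i a b c ob) = a" "dB (enc i a b c ob) = b"
    "dC (enc i a b c ob) = c" "dO (enc i a b c ob) = ob"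
proof -
  define w where "w = (a * n1 + b) * n1 + c"
  have w: "w < mm" using w_lt assms unfolding w_def by blast
  have d2: "enc i a b c ob div 2 = i * mm + w" unfolding enc_def w_def using assms by simp
  have "enc i a b c ob div (2 * mm) = (enc i a b c ob div 2) div mm" by (simp add: div_mult2_eq)
  also have "\<dots> = i" unfolding d2 using w mm_pos by simp
  finally show "dI (enc i a b c ob) = i" unfolding dI_def in_index_def .
  have wm: "(enc i a b c ob div 2) mod mm = w" unfolding d2 using w by simp
  have "w div n1 = a * n1 + b" unfolding w_def using assms(4) by (rule dm_aux)
  then show "dA (enc i a b c ob) = a" "dB (enc i a b c ob) = b" unfolding dA_def dB_def wm
    using dm_aux[OF assms(3), of a] by simp_all
  show "dC (enc i a b c ob) = c" unfolding dC_def wm w_def using dm_aux(2)[OF assms(4)] by simp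
  show "dO (enc i a b c ob) = ob" unfolding dO_def out_bit_def enc_def by (rule dm_aux(2)[OF assms(5)])
qed

lemma enc_dec:
  assumes "k < NN"
  shows "k = enc (dI k) (dA k) (dB k) (dC k) (dO k)" "dI k < n1" "dA k < n1" "dB k < n1" "dC k < n1" "dO k < 2"
proof -
  have "dI k < n1"
  proof -
    have "k < (n1 * mm) * 2" using assms NN_eq by simp
    then have "k div 2 < n1 * mm" by simp
    then show ?thesis unfolding dI_def in_index_def
      by (simp add: div_mult2_eq less_mult_imp_div_less)
  qed
  then show "dI k < n1" .
  have wl: "(k div 2) mod mm < mm" using mm_pos by simp
  show "dA k < n1" unfolding dA_def
  proof -
    have "(k div 2) mod mm div n1 div n1 < n1"
      using wl unfolding mm_def by (rule div3_aux)
    then show "(k div 2) mod mm div n1 div n1 < n1" .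
  qed
  show "dB k < n1" "dC k < n1" "dO k < 2" unfolding dB_def dC_def dO_def out_bit_def by simp_all
  have "k = (k div 2) * 2 + k mod 2" by simp
  also have "k div 2 = (k div 2) div mm * mm + (k div 2) mod mm" by simp
  also have "(k div 2) div mm = dI k" unfolding dI_def in_index_def by (simp add: div_mult2_eq)
  also have "(k div 2) mod mm = ((k div 2) mod mm div n1) * n1 + (k div 2) mod mm mod n1" by (rule div_mult_mod_eq[symmetric])
  also have "(k div 2) mod mm div n1 = dA k * n1 + dB k" unfolding dA_def dB_def by (rule div_mult_mod_eq[symmetric])
  finally show "k = enc (dI k) (dA k) (dB k) (dC k) (dO k)"
    unfolding enc_def dC_def dO_def out_bit_def by (simp add: mult.commute)
qed

definition lv :: "(nat \<Rightarrow> nat \<Rightarrow> nat \<Rightarrow> nat \<Rightarrow> nat \<Rightarrow> real) \<Rightarrow> nat \<Rightarrow> real" where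
  "lv L k = (if k < NN then L (dI k) (dA k) (dB k) (dC k) (dO k) else 0)"

lemma lv_enc: "i < n1 \<Longrightarrow> a < n1 \<Longrightarrow> b < n1 \<Longrightarrow> c < n1 \<Longrightarrow> ob < 2 \<Longrightarrow> lv L (enc i a b c ob) = L i a b c ob"
  unfolding lv_def using enc_lt dec_enc by simp

definition lsum :: "(nat \<Rightarrow> nat \<Rightarrow> nat \<Rightarrow> nat \<Rightarrow> nat \<Rightarrow> real) \<Rightarrow> real" where
  "lsum L = (\<Sum>i<n1. \<Sum>a<n1. \<Sum>b<n1. \<Sum>c<n1. \<Sum>ob<2. L i a b c ob)"

lemma ip_lv: "ip NN (lv L1) (lv L2) = lsum (\<lambda>i a b c ob. L1 i a b c ob * L2 i a b c ob)"
  unfolding ip_def sum_labels lsum_def by (intro sum.cong refl) (simp add: lv_enc)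

lemma ip_lv_gen: "ip NN (lv L1) v = lsum (\<lambda>i a b c ob. L1 i a b c ob * v (enc i a b c ob))"
  unfolding ip_def sum_labels lsum_def by (intro sum.cong refl) (simp add: lv_enc)

lemma eq_lvI:
  assumes "\<And>k. \<not> k < NN \<Longrightarrow> V k = 0"
    and "\<And>i a b c ob. i < n1 \<Longrightarrow> a < n1 \<Longrightarrow> b < n1 \<Longrightarrow> c < n1 \<Longrightarrow> ob < 2 \<Longrightarrow> V (enc i a b c ob) = L i a b c ob"
  shows "V = lv L"
proof (rule ext)
  fix k
  show "V k = lv L k"
  proof (cases "k < NN")
    case True
    then show ?thesis using enc_dec[OF True] assms(2)[of "dI k" "dA k" "dB k" "dC k" "dO k"]
      unfolding lv_def by simp
  qed (simp add: assms(1) lv_def)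
qed

end

lemma sum_2: "(\<Sum>ob<(2::nat). g ob) = g 0 + g 1"
  by (simp add: numeral_2_eq_2)

declare sum.lessThan_Suc[simp del] lessThan_Suc[simp del]

context alg begin

definition "pp = 1 / sqrt (real n)"
definition "qq = sqrt (real n - 1) / sqrt (real n)"
definition "kk = 1 / sqrt (real n * (real n - 1) * (real n - 2))"

lemma n_ge: "(4::real) \<le> real n" using n4 by simp

lemma pp2: "pp^2 = 1 / real n" unfolding pp_def using n_ge by (simp add: power_divide)
lemma qq2: "qq^2 = (real n - 1) / real n" unfolding qq_def using n_ge by (simp add: power_divide)
lemma ppqq: "pp^2 + qq^2 = 1" unfolding pp2 qq2 using n_ge by (simp add: field_simps)
lemma kk2: "kk^2 * (real n * (real n - 1) * (real n - 2)) = 1"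
  unfolding kk_def using n_ge by (simp add: power_divide)
lemma pp_pos: "0 < pp" unfolding pp_def using n_ge by simp
lemma pp_lt1: "pp < 1"
proof -
  have "1 < sqrt (real n)" using n_ge by simp
  then show ?thesis unfolding pp_def by simp
qed

definition vt :: "nat \<Rightarrow> nat \<Rightarrow> nat \<Rightarrow> bool" where
  "vt a b c \<longleftrightarrow> 1 \<le> a \<and> a \<le> n \<and> 1 \<le> b \<and> b \<le> n \<and> 1 \<le> c \<and> c \<le> n \<and> a \<noteq> b \<and> a \<noteq> c \<and> b \<noteq> c"

abbreviation "DD \<equiv> {1..n}"

lemma vt_lt: "vt a b c \<Longrightarrow> a < n1 \<and> b < n1 \<and> c < n1"
  unfolding vt_def by simp

lemma sum_if_set: "(\<Sum>x\<in>A. if P x then f x else 0) = (\<Sum>x\<in>{x\<in>A. P x}. f x)" if "finite A"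
  for f :: "nat \<Rightarrow> real"
  using that by (simp add: sum.inter_filter)

lemma tsum_eq:
  fixes E :: "nat \<Rightarrow> nat \<Rightarrow> nat \<Rightarrow> real"
  shows "(\<Sum>a<n1. \<Sum>b<n1. \<Sum>c<n1. if vt a b c then E a b c else 0)
   = (\<Sum>b\<in>DD. \<Sum>c\<in>DD-{b}. \<Sum>a\<in>DD-{b,c}. E a b c)"
proof -
  have "(\<Sum>a<n1. \<Sum>b<n1. \<Sum>c<n1. if vt a b c then E a b c else 0)
     = (\<Sum>b<n1. \<Sum>a<n1. \<Sum>c<n1. if vt a b c then E a b c else 0)"
    by (rule sum.swap)
  also have "\<dots> = (\<Sum>b<n1. \<Sum>c<n1. \<Sum>a<n1. if vt a b c then E a b c else 0)"
    by (rule sum.cong[OF refl], rule sum.swap)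
  also have "\<dots> = (\<Sum>b<n1. \<Sum>c<n1. if b \<in> DD \<and> c \<in> DD - {b} then (\<Sum>a\<in>DD-{b,c}. E a b c) else 0)"
  proof (intro sum.cong refl)
    fix b c
    show "(\<Sum>a<n1. if vt a b c then E a b c else 0) = (if b \<in> DD \<and> c \<in> DD - {b} then (\<Sum>a\<in>DD-{b,c}. E a b c) else 0)"
    proof (cases "b \<in> DD \<and> c \<in> DD - {b}")
      case True
      have "{a\<in>{..<n1}. vt a b c} = DD - {b,c}" using True unfolding vt_def by auto
      moreover have "(\<Sum>a<n1. if vt a b c then E a b c else 0) = (\<Sum>a\<in>{a\<in>{..<n1}. vt a b c}. E a b c)"
        by (rule sum_if_set) simp
      ultimately show ?thesis using True by simp
    next
      case False
      then have "\<And>a. \<not> vt a b c" unfolding vt_def by auto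
      then show ?thesis using False by (simp only: if_False) simp
    qed
  qed
  also have "\<dots> = (\<Sum>b<n1. if b \<in> DD then (\<Sum>c\<in>DD-{b}. \<Sum>a\<in>DD-{b,c}. E a b c) else 0)"
  proof (intro sum.cong refl)
    fix b
    show "(\<Sum>c<n1. if b \<in> DD \<and> c \<in> DD - {b} then (\<Sum>a\<in>DD-{b,c}. E a b c) else 0) = (if b \<in> DD then (\<Sum>c\<in>DD-{b}. \<Sum>a\<in>DD-{b,c}. E a b c) else 0)"
    proof (cases "b \<in> DD")
      case True
      have "{c\<in>{..<n1}. b \<in> DD \<and> c \<in> DD - {b}} = DD - {b}" using True by auto
      moreover have "(\<Sum>c<n1. if b \<in> DD \<and> c \<in> DD - {b} then (\<Sum>a\<in>DD-{b,c}. E a b c) else 0) = (\<Sum>c\<in>{c\<in>{..<n1}. b \<in> DD \<and> c \<in> DD - {b}}. (\<Sum>a\<in>DD-{b,c}. E a b c))"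
        by (rule sum_if_set) simp
      ultimately show ?thesis using True by simp
    next
      case False
      then show ?thesis by (subst if_not_P) (auto intro!: sum.neutral)
    qed
  qed
  also have "\<dots> = (\<Sum>b\<in>DD. \<Sum>c\<in>DD-{b}. \<Sum>a\<in>DD-{b,c}. E a b c)"
  proof -
    have "{b\<in>{..<n1}. b \<in> DD} = DD" by auto
    moreover have "(\<Sum>b<n1. if b \<in> DD then (\<Sum>c\<in>DD-{b}. \<Sum>a\<in>DD-{b,c}. E a b c) else 0) = (\<Sum>b\<in>{b\<in>{..<n1}. b \<in> DD}. (\<Sum>c\<in>DD-{b}. \<Sum>a\<in>DD-{b,c}. E a b c))"
      by (rule sum_if_set) simp
    ultimately show ?thesis by simp
  qed
  finally show ?thesis .
qed

lemma card_D2: "b \<in> DD \<Longrightarrow> c \<in> DD \<Longrightarrow> b \<noteq> c \<Longrightarrow> card (DD - {b,c}) = n - 2"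
  by (subst card_Diff_subset) auto

lemma card_D1: "b \<in> DD \<Longrightarrow> card (DD - {b}) = n - 1"
  by simp

lemma rn2: "real (n - 2) = real n - 2" "real (n - 1) = real n - 1" using n4 by auto

lemma tsum_const: "(\<Sum>b\<in>DD. \<Sum>c\<in>DD-{b}. \<Sum>a\<in>DD-{b,c}. (1::real)) = real n * (real n - 1) * (real n - 2)"
proof -
  have "(\<Sum>b\<in>DD. \<Sum>c\<in>DD-{b}. \<Sum>a\<in>DD-{b,c}. (1::real)) = (\<Sum>b\<in>DD. \<Sum>c\<in>DD-{b}. real n - 2)"
    by (intro sum.cong refl) (simp add: card_D2 rn2)
  also have "\<dots> = (\<Sum>b\<in>DD. (real n - 1) * (real n - 2))" by (intro sum.cong refl) (simp add: rn2)
  also have "\<dots> = real n * ((real n - 1) * (real n - 2))" by simp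
  finally show ?thesis by simp
qed

lemma lsum_vt:
  "lsum (\<lambda>i a b c ob. if vt a b c then P i a b c ob else 0)
   = (\<Sum>b\<in>DD. \<Sum>c\<in>DD-{b}. \<Sum>a\<in>DD-{b,c}. \<Sum>i<n1. P i a b c 0 + P i a b c 1)"
proof -
  have "lsum (\<lambda>i a b c ob. if vt a b c then P i a b c ob else 0)
      = (\<Sum>i<n1. \<Sum>a<n1. \<Sum>b<n1. \<Sum>c<n1. if vt a b c then P i a b c 0 + P i a b c 1 else 0)"
    unfolding lsum_def sum_2 by (intro sum.cong refl) simp
  also have "\<dots> = (\<Sum>a<n1. \<Sum>i<n1. \<Sum>b<n1. \<Sum>c<n1. if vt a b c then P i a b c 0 + P i a b c 1 else 0)"
    by (rule sum.swap)
  also have "\<dots> = (\<Sum>a<n1. \<Sum>b<n1. \<Sum>i<n1. \<Sum>c<n1. if vt a b c then P i a b c 0 + P i a b c 1 else 0)"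
    by (rule sum.cong[OF refl], rule sum.swap)
  also have "\<dots> = (\<Sum>a<n1. \<Sum>b<n1. \<Sum>c<n1. \<Sum>i<n1. if vt a b c then P i a b c 0 + P i a b c 1 else 0)"
    by (rule sum.cong[OF refl], rule sum.cong[OF refl], rule sum.swap)
  also have "\<dots> = (\<Sum>a<n1. \<Sum>b<n1. \<Sum>c<n1. if vt a b c then (\<Sum>i<n1. P i a b c 0 + P i a b c 1) else 0)"
    by (intro sum.cong refl) simp
  also have "\<dots> = (\<Sum>b\<in>DD. \<Sum>c\<in>DD-{b}. \<Sum>a\<in>DD-{b,c}. \<Sum>i<n1. P i a b c 0 + P i a b c 1)"
    by (rule tsum_eq)
  finally show ?thesis .
qed

lemma sum_if_const: "(\<Sum>x\<in>A. if P then f x else 0) = (if P then (\<Sum>x\<in>A. f x) else 0)"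
  by (cases P) simp_all

lemma lsum_point:
  assumes "i0 < n1" "a0 < n1" "b0 < n1" "c0 < n1" "o0 < 2"
  shows "lsum (\<lambda>i a b c ob. if i = i0 \<and> a = a0 \<and> b = b0 \<and> c = c0 \<and> ob = o0 then x else 0) = x"
proof -
  have e: "(if i = i0 \<and> a = a0 \<and> b = b0 \<and> c = c0 \<and> ob = o0 then x else 0)
     = (if i = i0 then (if a = a0 then (if b = b0 then (if c = c0 then (if ob = o0 then x else 0) else 0) else 0) else 0) else 0)"
    for i a b c ob by simp
  show ?thesis unfolding lsum_def e using assms by (simp add: sum.delta sum_if_const)
qed

lemma lsum_zero: "(\<And>i a b c ob. L i a b c ob = 0) \<Longrightarrow> lsum L = 0"
  unfolding lsum_def by simp

lemma lsum_add: "lsum (\<lambda>i a b c ob. L1 i a b c ob + L2 i a b c ob) = lsum L1 + lsum L2"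
  unfolding lsum_def by (simp add: sum.distrib)

lemma lsum_cmult: "lsum (\<lambda>i a b c ob. x * L i a b c ob) = x * lsum L"
  unfolding lsum_def by (simp add: sum_distrib_left)

definition initr :: "nat \<Rightarrow> real" where "initr k = (if k = 0 then 1 else 0)"

definition e0L :: "nat \<Rightarrow> nat \<Rightarrow> nat \<Rightarrow> nat \<Rightarrow> nat \<Rightarrow> real" where
  "e0L i a b c ob = (if i = 0 \<and> a = 0 \<and> b = 0 \<and> c = 0 \<and> ob = 0 then 1 else 0)"

lemma NN_pos: "0 < NN" unfolding NN_eq mm_def by simp

lemma initr_lv: "initr = lv e0L"
proof (rule eq_lvI)
  show "\<And>k. \<not> k < NN \<Longrightarrow> initr k = 0" using NN_pos unfolding initr_def by auto
  fix i a b c ob :: nat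
  assume "i < n1" "a < n1" "b < n1" "c < n1" "ob < 2"
  show "initr (enc i a b c ob) = e0L i a b c ob"
    unfolding initr_def e0L_def enc_def using mm_pos by auto
qed

end

context alg begin

definition phiL :: "nat \<Rightarrow> nat \<Rightarrow> nat \<Rightarrow> nat \<Rightarrow> nat \<Rightarrow> real" where
  "phiL i a b c ob = (if vt a b c then (if ob = 1 then kk * ((if i = b then pp else 0) + (if i = c then qq else 0)) else 0) else 0)"

definition w0L :: "nat \<Rightarrow> nat \<Rightarrow> nat \<Rightarrow> nat \<Rightarrow> nat \<Rightarrow> real" where
  "w0L i a b c ob = (e0L i a b c ob - phiL i a b c ob) / sqrt 2"

definition "U0r = reflm NN {0::nat} (\<lambda>_. lv w0L) (\<lambda>_ _. 1)"

lemma e0_phi: "e0L i a b c ob * phiL i a b c ob = 0"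
  unfolding e0L_def phiL_def vt_def by auto

lemma sum_sq2:
  assumes "b < n1" "c < n1" "b \<noteq> c"
  shows "(\<Sum>i<n1. ((if i = b then x else 0) + (if i = c then y else 0))^2) = x^2 + (y::real)^2"
proof -
  have "((if i = b then x else 0) + (if i = c then y else 0))^2 = (if i = b then x^2 else 0) + (if i = c then y^2 else 0)" for i
    using assms by auto
  then show ?thesis using assms by (simp add: sum.distrib sum.delta)
qed

lemma lsum_phi2: "lsum (\<lambda>i a b c ob. phiL i a b c ob * phiL i a b c ob) = 1"
proof -
  have e: "phiL i a b c ob * phiL i a b c ob = (if vt a b c then (if ob = 1 then kk^2 * ((if i = b then pp else 0) + (if i = c then qq else 0))^2 else 0) else 0)" for i a b c ob
    unfolding phiL_def by (simp add: power2_eq_square)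
  have "lsum (\<lambda>i a b c ob. phiL i a b c ob * phiL i a b c ob)
     = (\<Sum>b\<in>DD. \<Sum>c\<in>DD-{b}. \<Sum>a\<in>DD-{b,c}. \<Sum>i<n1. kk^2 * ((if i = b then pp else 0) + (if i = c then qq else 0))^2)"
    unfolding e lsum_vt by simp
  also have "\<dots> = (\<Sum>b\<in>DD. \<Sum>c\<in>DD-{b}. \<Sum>a\<in>DD-{b,c}. kk^2 * 1)"
  proof (intro sum.cong refl)
    fix b c a assume b: "b \<in> DD" and c: "c \<in> DD - {b}"
    have "(\<Sum>i<n1. kk^2 * ((if i = b then pp else 0) + (if i = c then qq else 0))^2) = kk^2 * (pp^2 + qq^2)"
      using b c by (simp add: sum_distrib_left[symmetric] sum_sq2)
    then show "(\<Sum>i<n1. kk^2 * ((if i = b then pp else 0) + (if i = c then qq else 0))^2) = kk^2 * 1"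
      using ppqq by simp
  qed
  also have "\<dots> = kk^2 * (\<Sum>b\<in>DD. \<Sum>c\<in>DD-{b}. \<Sum>a\<in>DD-{b,c}. (1::real))"
    by (simp add: sum_distrib_left)
  also have "\<dots> = 1" using tsum_const kk2 by simp
  finally show ?thesis .
qed

lemma lsum_e02: "lsum (\<lambda>i a b c ob. e0L i a b c ob * e0L i a b c ob) = 1"
proof -
  have "(\<lambda>i a b c ob. e0L i a b c ob * e0L i a b c ob) = (\<lambda>i a b c ob. if i = 0 \<and> a = 0 \<and> b = 0 \<and> c = 0 \<and> ob = 0 then 1 else 0)"
    unfolding e0L_def by (intro ext) simp
  then show ?thesis using lsum_point[of 0 0 0 0 0 1] by simp
qed

lemma ip_w0: "ip NN (lv w0L) (lv w0L) = 1"
proof -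
  have "(\<lambda>i a b c ob. w0L i a b c ob * w0L i a b c ob)
     = (\<lambda>i a b c ob. (1/2) * (e0L i a b c ob * e0L i a b c ob) + (1/2) * (phiL i a b c ob * phiL i a b c ob))"
    unfolding w0L_def using e0_phi by (intro ext) (simp add: field_simps power2_eq_square)
  then show ?thesis unfolding ip_lv by (simp only: lsum_add lsum_cmult lsum_e02 lsum_phi2)
qed

lemma ip_w0_e0: "ip NN (lv w0L) (lv e0L) = 1 / sqrt 2"
proof -
  have "(\<lambda>i a b c ob. w0L i a b c ob * e0L i a b c ob)
     = (\<lambda>i a b c ob. (1 / sqrt 2) * (e0L i a b c ob * e0L i a b c ob))"
    unfolding w0L_def using e0_phi by (intro ext) (simp add: field_simps mult.commute)
  then show ?thesis unfolding ip_lv by (simp only: lsum_cmult lsum_e02)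
qed

lemma U0_unit: "runit NN U0r"
  unfolding U0r_def by (rule refl_unit) (simp_all add: ip_w0)

lemma U0_app: "rapp NN U0r initr = lv phiL"
proof (rule eq_lvI)
  show "\<And>k. \<not> k < NN \<Longrightarrow> rapp NN U0r initr k = 0" unfolding rapp_def by simp
  fix i a b c ob :: nat
  assume r: "i < n1" "a < n1" "b < n1" "c < n1" "ob < 2"
  have "rapp NN U0r initr (enc i a b c ob) = initr (enc i a b c ob) - 2 * (lv w0L (enc i a b c ob) * ip NN (lv w0L) initr)"
    unfolding U0r_def using rapp_refl[OF enc_lt[OF r], where K="{0::nat}" and f="\<lambda>_. lv w0L" and H="\<lambda>_ _. 1" and v=initr] by simp
  also have "\<dots> = e0L i a b c ob - 2 * (w0L i a b c ob * (1 / sqrt 2))"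
    unfolding initr_lv lv_enc[OF r] ip_w0_e0 ..
  also have "\<dots> = phiL i a b c ob" unfolding w0L_def by (simp add: field_simps)
  finally show "rapp NN U0r initr (enc i a b c ob) = phiL i a b c ob" .
qed

end

definition tri :: "real \<Rightarrow> real \<Rightarrow> real \<Rightarrow> nat \<Rightarrow> nat \<Rightarrow> nat \<Rightarrow> nat \<Rightarrow> real" where
  "tri x1 x2 x3 a b c i = (if i = a then x1 else 0) + (if i = b then x2 else 0) + (if i = c then x3 else 0)"

lemma tri_sum:
  assumes "a < N" "b < N" "c < N" "a \<noteq> b" "a \<noteq> c" "b \<noteq> c"
  shows "(\<Sum>i<N. tri x1 x2 x3 a b c i * tri y1 y2 y3 a b c i) = x1 * y1 + x2 * y2 + x3 * y3"
proof -
  have "tri x1 x2 x3 a b c i * tri y1 y2 y3 a b c i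
     = (if i = a then x1 * y1 else 0) + (if i = b then x2 * y2 else 0) + (if i = c then x3 * y3 else 0)" for i
    unfolding tri_def using assms by auto
  then show ?thesis using assms by (simp add: sum.distrib sum.delta)
qed

context alg begin

definition vecT :: "nat \<Rightarrow> (nat \<Rightarrow> nat \<Rightarrow> nat \<Rightarrow> real) \<Rightarrow> (nat \<Rightarrow> nat \<Rightarrow> nat \<Rightarrow> real) \<Rightarrow> (nat \<Rightarrow> nat \<Rightarrow> nat \<Rightarrow> real)
   \<Rightarrow> nat \<Rightarrow> nat \<Rightarrow> nat \<Rightarrow> nat \<Rightarrow> nat \<Rightarrow> real" where
  "vecT t X1 X2 X3 i a b c ob = (if vt a b c then (if ob = t then tri (X1 a b c) (X2 a b c) (X3 a b c) a b c i else 0) else 0)"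

lemma vt_distinct: "vt a b c \<Longrightarrow> a < n1 \<and> b < n1 \<and> c < n1 \<and> a \<noteq> b \<and> a \<noteq> c \<and> b \<noteq> c"
  unfolding vt_def by simp

lemma phiL_vecT: "phiL = vecT 1 (\<lambda>_ _ _. 0) (\<lambda>_ _ _. kk * pp) (\<lambda>_ _ _. kk * qq)"
  unfolding phiL_def vecT_def tri_def by (intro ext) (auto simp: vt_def)

definition zz :: "bool list \<Rightarrow> nat \<Rightarrow> real" where "zz x i = (if xbit x i then -1 else 1)"

definition rquery :: "bool list \<Rightarrow> (nat \<Rightarrow> real) \<Rightarrow> nat \<Rightarrow> real" where
  "rquery x v k = (if k < NN then (if xbit x (in_index mm k) then - v k else v k) else 0)"

lemma zz_sq: "zz x i * zz x i = 1" unfolding zz_def by simp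

lemma rquery_vecT:
  "rquery x (lv (vecT t X1 X2 X3)) = lv (vecT t (\<lambda>a b c. zz x a * X1 a b c) (\<lambda>a b c. zz x b * X2 a b c) (\<lambda>a b c. zz x c * X3 a b c))"
proof (rule eq_lvI)
  show "\<And>k. \<not> k < NN \<Longrightarrow> rquery x (lv (vecT t X1 X2 X3)) k = 0" unfolding rquery_def by simp
  fix i a b c ob :: nat
  assume r: "i < n1" "a < n1" "b < n1" "c < n1" "ob < 2"
  have "in_index mm (enc i a b c ob) = i" using dec_enc(1)[OF r] unfolding dI_def .
  then show "rquery x (lv (vecT t X1 X2 X3)) (enc i a b c ob) = vecT t (\<lambda>a b c. zz x a * X1 a b c) (\<lambda>a b c. zz x b * X2 a b c) (\<lambda>a b c. zz x c * X3 a b c) i a b c ob"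
    unfolding rquery_def using enc_lt[OF r] lv_enc[OF r] unfolding vecT_def tri_def zz_def by auto
qed

definition "VT = {(a, b, c). vt a b c}"

lemma VT_fin: "finite VT"
proof -
  have "VT \<subseteq> {..<n1} \<times> {..<n1} \<times> {..<n1}" unfolding VT_def vt_def by auto
  then show ?thesis by (rule finite_subset) simp
qed

definition bvec :: "(nat \<Rightarrow> nat \<Rightarrow> nat \<Rightarrow> nat \<Rightarrow> real) \<Rightarrow> nat \<times> nat \<times> nat \<Rightarrow> nat \<Rightarrow> nat \<Rightarrow> nat \<Rightarrow> nat \<Rightarrow> nat \<Rightarrow> real" where
  "bvec g T i a b c ob = (if (a, b, c) = T \<and> ob = 1 then g a b c i else 0)"

definition "bref g = reflm NN VT (\<lambda>T. lv (bvec g T)) (\<lambda>T T'. if T = T' then 1 else 0)"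

lemma lsum_branch:
  assumes "a0 < n1" "b0 < n1" "c0 < n1"
  shows "lsum (\<lambda>i a b c ob. if (a, b, c) = (a0, b0, c0) \<and> ob = 1 then X i a b c ob else 0) = (\<Sum>i<n1. X i a0 b0 c0 1)"
proof -
  have e: "(if (a, b, c) = (a0, b0, c0) \<and> ob = 1 then X i a b c ob else 0)
     = (if a = a0 then (if b = b0 then (if c = c0 then (if ob = 1 then X i a0 b0 c0 1 else 0) else 0) else 0) else 0)"
    for i a b c ob by auto
  show ?thesis unfolding lsum_def e using assms by (simp add: sum.delta sum_if_const)
qed

lemma ip_bvec:
  assumes "(a0, b0, c0) \<in> VT"
  shows "ip NN (lv (bvec g (a0, b0, c0))) v = (\<Sum>i<n1. g a0 b0 c0 i * v (enc i a0 b0 c0 1))"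
proof -
  have r: "a0 < n1" "b0 < n1" "c0 < n1" using assms unfolding VT_def vt_def by auto
  have "ip NN (lv (bvec g (a0, b0, c0))) v = lsum (\<lambda>i a b c ob. if (a, b, c) = (a0, b0, c0) \<and> ob = 1 then g a b c i * v (enc i a b c ob) else 0)"
    unfolding ip_lv_gen bvec_def by (rule arg_cong[where f=lsum]) (intro ext, simp)
  also have "\<dots> = (\<Sum>i<n1. g a0 b0 c0 i * v (enc i a0 b0 c0 1))" using lsum_branch[OF r] .
  finally show ?thesis .
qed

lemma bvec_ortho:
  assumes "T \<in> VT" "T' \<in> VT" and gn: "\<And>a b c. vt a b c \<Longrightarrow> (\<Sum>i<n1. g a b c i * g a b c i) = 1"
  shows "ip NN (lv (bvec g T)) (lv (bvec g T')) = (if T = T' then 1 else 0)"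
proof -
  obtain a0 b0 c0 where T: "T = (a0, b0, c0)" by (cases T) auto
  have r: "i < n1 \<Longrightarrow> enc i a0 b0 c0 1 < NN" for i using assms(1) enc_lt unfolding T VT_def vt_def by auto
  have "ip NN (lv (bvec g T)) (lv (bvec g T')) = (\<Sum>i<n1. g a0 b0 c0 i * lv (bvec g T') (enc i a0 b0 c0 1))"
    using ip_bvec assms(1) T by simp
  also have "\<dots> = (\<Sum>i<n1. g a0 b0 c0 i * (if T = T' then g a0 b0 c0 i else 0))"
  proof (intro sum.cong refl)
    fix i assume "i \<in> {..<n1}"
    then have "i < n1" by simp
    then show "g a0 b0 c0 i * lv (bvec g T') (enc i a0 b0 c0 1) = g a0 b0 c0 i * (if T = T' then g a0 b0 c0 i else 0)"
      using assms(1) lv_enc[of i a0 b0 c0 1] unfolding bvec_def T VT_def vt_def by auto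
  qed
  also have "\<dots> = (if T = T' then 1 else 0)" using gn assms(1) unfolding T VT_def by (cases "T = T'") auto
  finally show ?thesis .
qed

lemma bref_unit:
  assumes gn: "\<And>a b c. vt a b c \<Longrightarrow> (\<Sum>i<n1. g a b c i * g a b c i) = 1"
  shows "runit NN (bref g)"
  unfolding bref_def
proof (rule refl_unit[OF VT_fin])
  fix j r assume j: "j \<in> VT" and "r < NN"
  have "(\<Sum>k\<in>VT. \<Sum>l\<in>VT. lv (bvec g k) r * (if k = l then 1 else 0) * ip NN (lv (bvec g l)) (lv (bvec g j)))
    = (\<Sum>k\<in>VT. \<Sum>l\<in>VT. if l = k then (if k = j then lv (bvec g k) r else 0) else 0)"
    using bvec_ortho[OF _ j gn] by (intro sum.cong refl) auto
  also have "\<dots> = lv (bvec g j) r" using j VT_fin by (simp add: sum.delta)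
  finally show "(\<Sum>k\<in>VT. \<Sum>l\<in>VT. lv (bvec g k) r * (if k = l then 1 else 0) * ip NN (lv (bvec g l)) (lv (bvec g j))) = lv (bvec g j) r" .
qed simp

lemma bref_app:
  assumes gt: "\<And>a b c i. g a b c i = tri (G1 a b c) (G2 a b c) (G3 a b c) a b c i"
  shows "rapp NN (bref g) (lv (vecT 1 X1 X2 X3)) = lv (vecT 1
     (\<lambda>a b c. X1 a b c - 2 * G1 a b c * (G1 a b c * X1 a b c + G2 a b c * X2 a b c + G3 a b c * X3 a b c))
     (\<lambda>a b c. X2 a b c - 2 * G2 a b c * (G1 a b c * X1 a b c + G2 a b c * X2 a b c + G3 a b c * X3 a b c))
     (\<lambda>a b c. X3 a b c - 2 * G3 a b c * (G1 a b c * X1 a b c + G2 a b c * X2 a b c + G3 a b c * X3 a b c)))"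
  (is "_ = lv ?R")
proof (rule eq_lvI)
  show "\<And>k. \<not> k < NN \<Longrightarrow> rapp NN (bref g) (lv (vecT 1 X1 X2 X3)) k = 0" unfolding rapp_def by simp
  fix i a b c ob :: nat
  assume r: "i < n1" "a < n1" "b < n1" "c < n1" "ob < 2"
  define V where "V = lv (vecT 1 X1 X2 X3)"
  have "rapp NN (bref g) V (enc i a b c ob) = V (enc i a b c ob) - 2 * (\<Sum>k\<in>VT. \<Sum>l\<in>VT. lv (bvec g k) (enc i a b c ob) * (if k = l then 1 else 0) * ip NN (lv (bvec g l)) V)"
    unfolding bref_def by (rule rapp_refl[OF enc_lt[OF r]])
  also have "(\<Sum>k\<in>VT. \<Sum>l\<in>VT. lv (bvec g k) (enc i a b c ob) * (if k = l then 1 else 0) * ip NN (lv (bvec g l)) V)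
     = (\<Sum>k\<in>VT. if k = (a, b, c) then (if ob = 1 then g a b c i * ip NN (lv (bvec g (a, b, c))) V else 0) else 0)"
  proof (rule sum.cong[OF refl])
    fix k assume k: "k \<in> VT"
    have "(\<Sum>l\<in>VT. lv (bvec g k) (enc i a b c ob) * (if k = l then 1 else 0) * ip NN (lv (bvec g l)) V)
      = (\<Sum>l\<in>VT. if k = l then lv (bvec g k) (enc i a b c ob) * ip NN (lv (bvec g k)) V else 0)"
      by (intro sum.cong refl) auto
    also have "\<dots> = lv (bvec g k) (enc i a b c ob) * ip NN (lv (bvec g k)) V" using k VT_fin by (simp add: sum.delta)
    also have "\<dots> = (if k = (a, b, c) then (if ob = 1 then g a b c i * ip NN (lv (bvec g (a, b, c))) V else 0) else 0)"
      unfolding lv_enc[OF r] bvec_def by auto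
    finally show "(\<Sum>l\<in>VT. lv (bvec g k) (enc i a b c ob) * (if k = l then 1 else 0) * ip NN (lv (bvec g l)) V)
      = (if k = (a, b, c) then (if ob = 1 then g a b c i * ip NN (lv (bvec g (a, b, c))) V else 0) else 0)" .
  qed
  also have "\<dots> = (if vt a b c \<and> ob = 1 then g a b c i * ip NN (lv (bvec g (a, b, c))) V else 0)"
    using VT_fin by (simp add: sum.delta VT_def)
  finally have e1: "rapp NN (bref g) V (enc i a b c ob) = V (enc i a b c ob) - 2 * (if vt a b c \<and> ob = 1 then g a b c i * ip NN (lv (bvec g (a, b, c))) V else 0)" .
  show "rapp NN (bref g) V (enc i a b c ob) = ?R i a b c ob"
  proof (cases "vt a b c \<and> ob = 1")
    case True
    then have abc: "(a, b, c) \<in> VT" unfolding VT_def by simp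
    have d: "a < n1" "b < n1" "c < n1" "a \<noteq> b" "a \<noteq> c" "b \<noteq> c" using True vt_distinct by auto
    have "ip NN (lv (bvec g (a, b, c))) V = (\<Sum>i'<n1. g a b c i' * V (enc i' a b c 1))" by (rule ip_bvec[OF abc])
    also have "\<dots> = (\<Sum>i'<n1. tri (G1 a b c) (G2 a b c) (G3 a b c) a b c i' * tri (X1 a b c) (X2 a b c) (X3 a b c) a b c i')"
    proof (intro sum.cong refl)
      fix i' assume "i' \<in> {..<n1}"
      then show "g a b c i' * V (enc i' a b c 1) = tri (G1 a b c) (G2 a b c) (G3 a b c) a b c i' * tri (X1 a b c) (X2 a b c) (X3 a b c) a b c i'"
        unfolding V_def using lv_enc[of i' a b c 1] d True gt unfolding vecT_def by simp
    qed
    also have "\<dots> = G1 a b c * X1 a b c + G2 a b c * X2 a b c + G3 a b c * X3 a b c" by (rule tri_sum[OF d])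
    finally have ipv: "ip NN (lv (bvec g (a, b, c))) V = G1 a b c * X1 a b c + G2 a b c * X2 a b c + G3 a b c * X3 a b c" .
    show ?thesis unfolding e1 ipv unfolding V_def lv_enc[OF r] vecT_def using True gt
      unfolding tri_def by (simp add: algebra_simps)
  next
    case False
    then show ?thesis unfolding e1 unfolding V_def lv_enc[OF r] vecT_def by auto
  qed
qed

end

context alg begin

definition "dd = sqrt (2 - 2 * pp)"

lemma dd_sq: "dd * dd = 2 - 2 * pp" unfolding dd_def using pp_lt1 by simp
lemma dd_pos: "0 < dd" unfolding dd_def using pp_lt1 by simp
lemma s2_sq: "sqrt 2 * sqrt 2 = (2::real)" by simp

definition "g1 a b c i = tri (- qq / dd) ((1 - pp) / dd) 0 a b c i"
definition "g2 a b c i = tri (pp / sqrt 2) (- qq / sqrt 2) (1 / sqrt 2) a b c i"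

definition "U1r = rmul NN (bref g2) (bref g1)"

lemma g1_norm: "vt a b c \<Longrightarrow> (\<Sum>i<n1. g1 a b c i * g1 a b c i) = 1"
proof -
  assume "vt a b c"
  then have d: "a < n1" "b < n1" "c < n1" "a \<noteq> b" "a \<noteq> c" "b \<noteq> c" using vt_distinct by auto
  have "(\<Sum>i<n1. g1 a b c i * g1 a b c i) = (- qq / dd) * (- qq / dd) + ((1 - pp) / dd) * ((1 - pp) / dd) + 0 * 0"
    unfolding g1_def by (rule tri_sum[OF d])
  also have "\<dots> = (qq^2 + 1 - 2 * pp + pp^2) / (dd * dd)" using dd_pos by (simp add: field_simps power2_eq_square)
  also have "\<dots> = 1" unfolding dd_sq using ppqq pp_lt1 by (simp add: field_simps)
  finally show ?thesis .
qed

lemma g2_norm: "vt a b c \<Longrightarrow> (\<Sum>i<n1. g2 a b c i * g2 a b c i) = 1"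
proof -
  assume "vt a b c"
  then have d: "a < n1" "b < n1" "c < n1" "a \<noteq> b" "a \<noteq> c" "b \<noteq> c" using vt_distinct by auto
  have "(\<Sum>i<n1. g2 a b c i * g2 a b c i) = (pp / sqrt 2) * (pp / sqrt 2) + (- qq / sqrt 2) * (- qq / sqrt 2) + (1 / sqrt 2) * (1 / sqrt 2)"
    unfolding g2_def by (rule tri_sum[OF d])
  also have "\<dots> = (pp^2 + qq^2 + 1) / 2" by (simp add: field_simps power2_eq_square)
  also have "\<dots> = 1" using ppqq by simp
  finally show ?thesis .
qed

lemma U1_unit: "runit NN U1r"
  unfolding U1r_def by (intro rmul_unit bref_unit g1_norm g2_norm)

lemma vecT_cong:
  "(\<And>a b c. X1 a b c = Y1 a b c) \<Longrightarrow> (\<And>a b c. X2 a b c = Y2 a b c) \<Longrightarrow> (\<And>a b c. X3 a b c = Y3 a b c)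
   \<Longrightarrow> vecT t X1 X2 X3 = vecT t Y1 Y2 Y3"
proof -
  assume "\<And>a b c. X1 a b c = Y1 a b c" "\<And>a b c. X2 a b c = Y2 a b c" "\<And>a b c. X3 a b c = Y3 a b c"
  then have "X1 = Y1" "X2 = Y2" "X3 = Y3" by (auto intro!: ext)
  then show ?thesis by simp
qed

definition "FL x = vecT 1 (\<lambda>a b c. kk * pp * qq * zz x a * (zz x b - zz x c)) (\<lambda>a b c. kk * (pp^2 + qq^2 * zz x b * zz x c)) (\<lambda>_ _ _. 0)"

lemma R1_app: "rapp NN (bref g1) (lv (vecT 1 (\<lambda>a b c. zz x a * 0) (\<lambda>a b c. zz x b * (kk * pp)) (\<lambda>a b c. zz x c * (kk * qq))))
  = lv (vecT 1 (\<lambda>a b c. qq * kk * pp * zz x b) (\<lambda>a b c. kk * pp^2 * zz x b) (\<lambda>a b c. kk * qq * zz x c))"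
proof -
  have "rapp NN (bref g1) (lv (vecT 1 (\<lambda>a b c. zz x a * 0) (\<lambda>a b c. zz x b * (kk * pp)) (\<lambda>a b c. zz x c * (kk * qq))))
    = lv (vecT 1
     (\<lambda>a b c. zz x a * 0 - 2 * (- qq / dd) * ((- qq / dd) * (zz x a * 0) + ((1 - pp) / dd) * (zz x b * (kk * pp)) + 0 * (zz x c * (kk * qq))))
     (\<lambda>a b c. zz x b * (kk * pp) - 2 * ((1 - pp) / dd) * ((- qq / dd) * (zz x a * 0) + ((1 - pp) / dd) * (zz x b * (kk * pp)) + 0 * (zz x c * (kk * qq))))
     (\<lambda>a b c. zz x c * (kk * qq) - 2 * 0 * ((- qq / dd) * (zz x a * 0) + ((1 - pp) / dd) * (zz x b * (kk * pp)) + 0 * (zz x c * (kk * qq)))))"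
    by (rule bref_app) (simp add: g1_def)
  also have "\<dots> = lv (vecT 1 (\<lambda>a b c. qq * kk * pp * zz x b) (\<lambda>a b c. kk * pp^2 * zz x b) (\<lambda>a b c. kk * qq * zz x c))"
  proof (rule arg_cong[where f=lv], rule vecT_cong)
    have dd2: "dd * dd = 2 - 2 * pp" by (rule dd_sq)
    have ne: "2 - 2 * pp \<noteq> 0" "dd \<noteq> 0" using pp_lt1 dd_pos by auto
    fix a b c
    have "2 * (qq / dd) * ((1 - pp) / dd * (zz x b * (kk * pp))) = qq * kk * pp * zz x b * (2 * (1 - pp) / (dd * dd))"
      by (simp add: field_simps)
    also have "\<dots> = qq * kk * pp * zz x b" unfolding dd2 using ne by simp
    finally show "zz x a * 0 - 2 * (- qq / dd) * ((- qq / dd) * (zz x a * 0) + ((1 - pp) / dd) * (zz x b * (kk * pp)) + 0 * (zz x c * (kk * qq))) = qq * kk * pp * zz x b"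
      by simp
    have "zz x b * (kk * pp) - 2 * ((1 - pp) / dd) * ((1 - pp) / dd * (zz x b * (kk * pp))) = zz x b * kk * pp * (1 - 2 * (1 - pp) * (1 - pp) / (dd * dd))"
      by (simp add: field_simps)
    also have "\<dots> = zz x b * kk * pp * pp" unfolding dd2 using ne by (simp add: field_simps)
    finally show "zz x b * (kk * pp) - 2 * ((1 - pp) / dd) * ((- qq / dd) * (zz x a * 0) + ((1 - pp) / dd) * (zz x b * (kk * pp)) + 0 * (zz x c * (kk * qq))) = kk * pp^2 * zz x b"
      by (simp add: power2_eq_square)
    show "zz x c * (kk * qq) - 2 * 0 * ((- qq / dd) * (zz x a * 0) + ((1 - pp) / dd) * (zz x b * (kk * pp)) + 0 * (zz x c * (kk * qq))) = kk * qq * zz x c"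
      by simp
  qed
  finally show ?thesis .
qed

lemma R2_app: "rapp NN (bref g2) (lv (vecT 1 (\<lambda>a b c. qq * kk * pp * zz x b) (\<lambda>a b c. kk * pp^2 * zz x b) (\<lambda>a b c. kk * qq * zz x c)))
  = lv (vecT 1 (\<lambda>a b c. kk * pp * qq * (zz x b - zz x c)) (\<lambda>a b c. kk * (pp^2 * zz x b + qq^2 * zz x c)) (\<lambda>a b c. 0))"
proof -
  let ?I = "\<lambda>a b c. (pp / sqrt 2) * (qq * kk * pp * zz x b) + (- qq / sqrt 2) * (kk * pp^2 * zz x b) + (1 / sqrt 2) * (kk * qq * zz x c)"
  have I: "?I a b c = kk * qq * zz x c / sqrt 2" for a b c by (simp add: field_simps power2_eq_square)
  have "rapp NN (bref g2) (lv (vecT 1 (\<lambda>a b c. qq * kk * pp * zz x b) (\<lambda>a b c. kk * pp^2 * zz x b) (\<lambda>a b c. kk * qq * zz x c)))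
    = lv (vecT 1
     (\<lambda>a b c. qq * kk * pp * zz x b - 2 * (pp / sqrt 2) * ?I a b c)
     (\<lambda>a b c. kk * pp^2 * zz x b - 2 * (- qq / sqrt 2) * ?I a b c)
     (\<lambda>a b c. kk * qq * zz x c - 2 * (1 / sqrt 2) * ?I a b c))"
    by (rule bref_app) (simp add: g2_def)
  also have "\<dots> = lv (vecT 1 (\<lambda>a b c. kk * pp * qq * (zz x b - zz x c)) (\<lambda>a b c. kk * (pp^2 * zz x b + qq^2 * zz x c)) (\<lambda>a b c. 0))"
  proof (rule arg_cong[where f=lv], rule vecT_cong)
    fix a b c
    have s: "sqrt 2 * sqrt 2 = (2::real)" by simp
    show "qq * kk * pp * zz x b - 2 * (pp / sqrt 2) * ?I a b c = kk * pp * qq * (zz x b - zz x c)"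
      unfolding I by (simp add: field_simps s)
    show "kk * pp^2 * zz x b - 2 * (- qq / sqrt 2) * ?I a b c = kk * (pp^2 * zz x b + qq^2 * zz x c)"
      unfolding I by (simp add: field_simps s power2_eq_square)
    show "kk * qq * zz x c - 2 * (1 / sqrt 2) * ?I a b c = 0"
      unfolding I by (simp add: field_simps s)
  qed
  finally show ?thesis .
qed

lemma pre_U2: "rquery x (rapp NN U1r (rquery x (rapp NN U0r initr))) = lv (FL x)"
proof -
  have "rquery x (rapp NN U1r (rquery x (rapp NN U0r initr)))
     = rquery x (lv (vecT 1 (\<lambda>a b c. kk * pp * qq * (zz x b - zz x c)) (\<lambda>a b c. kk * (pp^2 * zz x b + qq^2 * zz x c)) (\<lambda>a b c. 0)))"
    unfolding U0_app phiL_vecT rquery_vecT U1r_def rapp_rmul R1_app R2_app ..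
  also have "\<dots> = lv (FL x)" unfolding rquery_vecT FL_def
  proof (rule arg_cong[where f=lv], rule vecT_cong)
    fix a b c
    show "zz x a * (kk * pp * qq * (zz x b - zz x c)) = kk * pp * qq * zz x a * (zz x b - zz x c)" by simp
    show "zz x b * (kk * (pp^2 * zz x b + qq^2 * zz x c)) = kk * (pp^2 + qq^2 * zz x b * zz x c)"
      using zz_sq[of x b] by (simp add: algebra_simps)
    show "zz x c * 0 = 0" by simp
  qed
  finally show ?thesis .
qed

end

context alg begin

definition del :: "nat \<Rightarrow> nat \<Rightarrow> real" where "del j b = (if b = j then 1 else 0)"

lemma ps1: "j \<in> DD \<Longrightarrow> k \<in> DD \<Longrightarrow> (\<Sum>b\<in>DD. \<Sum>c\<in>DD-{b}. del j b * del k b) = (real n - 1) * del j k"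
proof -
  assume j: "j \<in> DD" and k: "k \<in> DD"
  have "(\<Sum>b\<in>DD. \<Sum>c\<in>DD-{b}. del j b * del k b) = (\<Sum>b\<in>DD. (real n - 1) * (del j b * del k b))"
    by (intro sum.cong refl) (simp add: rn2)
  also have "\<dots> = (\<Sum>b\<in>DD. if b = j then (real n - 1) * del k j else 0)"
    by (intro sum.cong refl) (simp add: del_def)
  also have "\<dots> = (real n - 1) * del j k" using j by (simp add: del_def)
  finally show ?thesis .
qed

lemma ps2: "j \<in> DD \<Longrightarrow> k \<in> DD \<Longrightarrow> (\<Sum>b\<in>DD. \<Sum>c\<in>DD-{b}. del j b * del k c) = 1 - del j k"
proof -
  assume j: "j \<in> DD" and k: "k \<in> DD"
  have "(\<Sum>b\<in>DD. \<Sum>c\<in>DD-{b}. del j b * del k c) = (\<Sum>b\<in>DD. if b = j then (\<Sum>c\<in>DD-{j}. del k c) else 0)"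
    by (intro sum.cong refl) (simp add: del_def)
  also have "\<dots> = (\<Sum>c\<in>DD-{j}. del k c)" using j by simp
  also have "\<dots> = (\<Sum>c\<in>DD-{j}. if c = k then 1 else 0)" by (simp add: del_def)
  also have "\<dots> = 1 - del j k" using k by (simp add: del_def)
  finally show ?thesis .
qed

lemma ps3: "j \<in> DD \<Longrightarrow> k \<in> DD \<Longrightarrow> (\<Sum>b\<in>DD. \<Sum>c\<in>DD-{b}. del j c * del k b) = 1 - del j k"
proof -
  assume j: "j \<in> DD" and k: "k \<in> DD"
  have "(\<Sum>b\<in>DD. \<Sum>c\<in>DD-{b}. del j c * del k b) = (\<Sum>b\<in>DD. \<Sum>c\<in>DD-{b}. del k b * del j c)"
    by (simp add: mult.commute)
  also have "\<dots> = 1 - del k j" by (rule ps2[OF k j])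
  also have "del k j = del j k" by (simp add: del_def)
  finally show ?thesis .
qed

lemma ps4: "j \<in> DD \<Longrightarrow> k \<in> DD \<Longrightarrow> (\<Sum>b\<in>DD. \<Sum>c\<in>DD-{b}. del j c * del k c) = (real n - 1) * del j k"
proof -
  assume j: "j \<in> DD" and k: "k \<in> DD"
  define h where "h c = del j c * del k c" for c
  have hc: "h c = (if c = j then del j k else 0)" for c unfolding h_def del_def by auto
  have Sh: "(\<Sum>c\<in>DD. h c) = del j k" using j unfolding hc by simp
  have "(\<Sum>b\<in>DD. \<Sum>c\<in>DD-{b}. h c) = (\<Sum>b\<in>DD. (\<Sum>c\<in>DD. h c) - h b)"
    by (intro sum.cong refl) (simp add: sum_diff1)
  also have "\<dots> = real n * (\<Sum>c\<in>DD. h c) - (\<Sum>b\<in>DD. h b)" by (simp add: sum_subtractf)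
  also have "\<dots> = (real n - 1) * del j k" unfolding Sh by (simp add: algebra_simps)
  finally show ?thesis unfolding h_def .
qed

lemma psS: "j \<in> DD \<Longrightarrow> k \<in> DD \<Longrightarrow>
  (\<Sum>b\<in>DD. \<Sum>c\<in>DD-{b}. (del j b + del j c) * (del k b + del k c)) = 2 * (real n - 2) * del j k + 2"
proof -
  assume j: "j \<in> DD" and k: "k \<in> DD"
  have "(\<Sum>b\<in>DD. \<Sum>c\<in>DD-{b}. (del j b + del j c) * (del k b + del k c))
    = (\<Sum>b\<in>DD. \<Sum>c\<in>DD-{b}. del j b * del k b) + (\<Sum>b\<in>DD. \<Sum>c\<in>DD-{b}. del j b * del k c)
      + (\<Sum>b\<in>DD. \<Sum>c\<in>DD-{b}. del j c * del k b) + (\<Sum>b\<in>DD. \<Sum>c\<in>DD-{b}. del j c * del k c)"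
  proof -
    have e: "(del j b + del j c) * (del k b + del k c) = del j b * del k b + del j b * del k c + del j c * del k b + del j c * del k c" for b c
      by (simp add: algebra_simps)
    show ?thesis by (simp only: e sum.distrib)
  qed
  also have "\<dots> = 2 * (real n - 2) * del j k + 2" unfolding ps1[OF j k] ps2[OF j k] ps3[OF j k] ps4[OF j k]
    by (simp add: algebra_simps)
  finally show ?thesis .
qed

lemma psA: "j \<in> DD \<Longrightarrow> k \<in> DD \<Longrightarrow>
  (\<Sum>b\<in>DD. \<Sum>c\<in>DD-{b}. (del j b - del j c) * (del k b - del k c)) = 2 * real n * del j k - 2"
proof -
  assume j: "j \<in> DD" and k: "k \<in> DD"
  have "(\<Sum>b\<in>DD. \<Sum>c\<in>DD-{b}. (del j b - del j c) * (del k b - del k c))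
    = (\<Sum>b\<in>DD. \<Sum>c\<in>DD-{b}. del j b * del k b) - (\<Sum>b\<in>DD. \<Sum>c\<in>DD-{b}. del j b * del k c)
      - (\<Sum>b\<in>DD. \<Sum>c\<in>DD-{b}. del j c * del k b) + (\<Sum>b\<in>DD. \<Sum>c\<in>DD-{b}. del j c * del k c)"
  proof -
    have e: "(del j b - del j c) * (del k b - del k c) = del j b * del k b - del j b * del k c - del j c * del k b + del j c * del k c" for b c
      by (simp add: algebra_simps)
    show ?thesis by (simp only: e sum.distrib sum_subtractf)
  qed
  also have "\<dots> = 2 * real n * del j k - 2" unfolding ps1[OF j k] ps2[OF j k] ps3[OF j k] ps4[OF j k]
    by (simp add: algebra_simps)
  finally show ?thesis .
qed

end

context alg begin

definition bT :: "(nat \<Rightarrow> nat \<Rightarrow> nat \<Rightarrow> real) \<Rightarrow> (nat \<Rightarrow> nat \<Rightarrow> nat \<Rightarrow> real) \<Rightarrow> (nat \<Rightarrow> nat \<Rightarrow> nat \<Rightarrow> real)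
   \<Rightarrow> nat \<Rightarrow> nat \<Rightarrow> nat \<Rightarrow> nat \<Rightarrow> real" where
  "bT X1 X2 X3 i a b c = (if vt a b c then tri (X1 a b c) (X2 a b c) (X3 a b c) a b c i else 0)"

definition ssum :: "(nat \<Rightarrow> nat \<Rightarrow> nat \<Rightarrow> nat \<Rightarrow> real) \<Rightarrow> real" where
  "ssum B = (\<Sum>i<n1. \<Sum>a<n1. \<Sum>b<n1. \<Sum>c<n1. B i a b c)"

lemma ssum_vt:
  "ssum (\<lambda>i a b c. if vt a b c then P i a b c else 0)
   = (\<Sum>b\<in>DD. \<Sum>c\<in>DD-{b}. \<Sum>a\<in>DD-{b,c}. \<Sum>i<n1. P i a b c)"
proof -
  have "ssum (\<lambda>i a b c. if vt a b c then P i a b c else 0)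
      = (\<Sum>a<n1. \<Sum>i<n1. \<Sum>b<n1. \<Sum>c<n1. if vt a b c then P i a b c else 0)"
    unfolding ssum_def by (rule sum.swap)
  also have "\<dots> = (\<Sum>a<n1. \<Sum>b<n1. \<Sum>i<n1. \<Sum>c<n1. if vt a b c then P i a b c else 0)"
    by (rule sum.cong[OF refl], rule sum.swap)
  also have "\<dots> = (\<Sum>a<n1. \<Sum>b<n1. \<Sum>c<n1. \<Sum>i<n1. if vt a b c then P i a b c else 0)"
    by (rule sum.cong[OF refl], rule sum.cong[OF refl], rule sum.swap)
  also have "\<dots> = (\<Sum>a<n1. \<Sum>b<n1. \<Sum>c<n1. if vt a b c then (\<Sum>i<n1. P i a b c) else 0)"
    by (intro sum.cong refl) simp
  also have "\<dots> = (\<Sum>b\<in>DD. \<Sum>c\<in>DD-{b}. \<Sum>a\<in>DD-{b,c}. \<Sum>i<n1. P i a b c)"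
    by (rule tsum_eq)
  finally show ?thesis .
qed

lemma in_D3: "b \<in> DD \<Longrightarrow> c \<in> DD - {b} \<Longrightarrow> a \<in> DD - {b, c} \<Longrightarrow> vt a b c"
  unfolding vt_def by auto

lemma ssum_bT: "ssum (\<lambda>i a b c. bT X1 X2 X3 i a b c * bT Y1 Y2 Y3 i a b c)
  = (\<Sum>b\<in>DD. \<Sum>c\<in>DD-{b}. \<Sum>a\<in>DD-{b,c}. X1 a b c * Y1 a b c + X2 a b c * Y2 a b c + X3 a b c * Y3 a b c)"
proof -
  have e: "bT X1 X2 X3 i a b c * bT Y1 Y2 Y3 i a b c = (if vt a b c then tri (X1 a b c) (X2 a b c) (X3 a b c) a b c i * tri (Y1 a b c) (Y2 a b c) (Y3 a b c) a b c i else 0)" for i a b c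
    unfolding bT_def by simp
  show ?thesis unfolding e ssum_vt
  proof (intro sum.cong refl)
    fix b c a assume "b \<in> DD" "c \<in> DD - {b}" "a \<in> DD - {b, c}"
    then have "vt a b c" by (rule in_D3)
    then have d: "a < n1" "b < n1" "c < n1" "a \<noteq> b" "a \<noteq> c" "b \<noteq> c" using vt_distinct by auto
    show "(\<Sum>i<n1. tri (X1 a b c) (X2 a b c) (X3 a b c) a b c i * tri (Y1 a b c) (Y2 a b c) (Y3 a b c) a b c i)
      = X1 a b c * Y1 a b c + X2 a b c * Y2 a b c + X3 a b c * Y3 a b c" by (rule tri_sum[OF d])
  qed
qed

lemma sum_a_const: "b \<in> DD \<Longrightarrow> c \<in> DD - {b} \<Longrightarrow> (\<Sum>a\<in>DD-{b,c}. (h::real)) = (real n - 2) * h"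
  by (simp add: card_D2 rn2)

definition "bS j = bT (\<lambda>_ _ _. 0) (\<lambda>a b c. del j b + del j c) (\<lambda>_ _ _. 0)"
definition "bA j = bT (\<lambda>a b c. del j b - del j c) (\<lambda>_ _ _. 0) (\<lambda>_ _ _. 0)"

definition base :: "nat + nat \<Rightarrow> nat \<Rightarrow> nat \<Rightarrow> nat \<Rightarrow> nat \<Rightarrow> real" where
  "base u = (case u of Inl j \<Rightarrow> bS j | Inr j \<Rightarrow> bA j)"

definition sg :: "nat \<Rightarrow> real" where "sg ob = (if ob = 0 then 1 / sqrt 2 else - 1 / sqrt 2)"

definition "fam u = lv (\<lambda>i a b c ob. base u i a b c * sg ob)"

definition "K2 = Inl ` DD \<union> Inr ` DD"

lemma sum_K2: "(\<Sum>u\<in>K2. h u) = (\<Sum>j\<in>DD. h (Inl j)) + (\<Sum>j\<in>DD. h (Inr j))"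
proof -
  have "(\<Sum>u\<in>K2. h u) = (\<Sum>u\<in>Inl ` DD. h u) + (\<Sum>u\<in>Inr ` DD. h u)"
    unfolding K2_def by (rule sum.union_disjoint) auto
  also have "\<dots> = (\<Sum>j\<in>DD. h (Inl j)) + (\<Sum>j\<in>DD. h (Inr j))"
    by (simp add: sum.reindex)
  finally show ?thesis .
qed

lemma K2_fin: "finite K2" unfolding K2_def by simp

lemma ip_fam_gen: "ip NN (fam u) (lv V) = ssum (\<lambda>i a b c. base u i a b c * (sg 0 * V i a b c 0 + sg 1 * V i a b c 1))"
  unfolding fam_def ip_lv lsum_def ssum_def sum_2 by (intro sum.cong refl) (simp add: algebra_simps)

lemma sg_sq: "sg 0 * sg 0 + sg 1 * sg 1 = 1" unfolding sg_def by simp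

lemma ip_fam: "ip NN (fam u) (fam v) = ssum (\<lambda>i a b c. base u i a b c * base v i a b c)"
proof -
  have "ip NN (fam u) (fam v) = ssum (\<lambda>i a b c. base u i a b c * (sg 0 * (base v i a b c * sg 0) + sg 1 * (base v i a b c * sg 1)))"
    unfolding fam_def[of v] ip_fam_gen ..
  also have "\<dots> = ssum (\<lambda>i a b c. base u i a b c * base v i a b c)"
  proof -
    have "sg 0 * (x * sg 0) + sg 1 * (x * sg 1) = x * (sg 0 * sg 0 + sg 1 * sg 1)" for x by (simp add: algebra_simps)
    then have "sg 0 * (x * sg 0) + sg 1 * (x * sg 1) = x" for x unfolding sg_sq by simp
    then show ?thesis by simp
  qed
  finally show ?thesis .
qed

definition GG :: "nat + nat \<Rightarrow> nat + nat \<Rightarrow> real" where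
  "GG u v = (case (u, v) of (Inl j, Inl k) \<Rightarrow> (real n - 2) * (2 * (real n - 2) * del j k + 2)
     | (Inr j, Inr k) \<Rightarrow> (real n - 2) * (2 * real n * del j k - 2) | _ \<Rightarrow> 0)"

lemma gram: "u \<in> K2 \<Longrightarrow> v \<in> K2 \<Longrightarrow> ip NN (fam u) (fam v) = GG u v"
proof -
  assume u: "u \<in> K2" and v: "v \<in> K2"
  show ?thesis
  proof (cases u; cases v)
    fix j k assume uj: "u = Inl j" and vk: "v = Inl k"
    have j: "j \<in> DD" and k: "k \<in> DD" using u v uj vk unfolding K2_def by auto
    have "ip NN (fam u) (fam v) = (\<Sum>b\<in>DD. \<Sum>c\<in>DD-{b}. \<Sum>a\<in>DD-{b,c}. 0 * 0 + (del j b + del j c) * (del k b + del k c) + 0 * 0)"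
      unfolding ip_fam uj vk base_def bS_def by (simp only: sum.case ssum_bT)
    also have "\<dots> = (\<Sum>b\<in>DD. \<Sum>c\<in>DD-{b}. (real n - 2) * ((del j b + del j c) * (del k b + del k c)))"
      by (intro sum.cong refl) (simp add: sum_a_const)
    also have "\<dots> = (real n - 2) * (\<Sum>b\<in>DD. \<Sum>c\<in>DD-{b}. (del j b + del j c) * (del k b + del k c))"
      by (simp add: sum_distrib_left)
    also have "\<dots> = GG u v" unfolding psS[OF j k] GG_def uj vk by simp
    finally show ?thesis .
  next
    fix j k assume uj: "u = Inl j" and vk: "v = Inr k"
    have "ip NN (fam u) (fam v) = (\<Sum>b\<in>DD. \<Sum>c\<in>DD-{b}. \<Sum>a\<in>DD-{b,c}. 0 * (del k b - del k c) + (del j b + del j c) * 0 + 0 * 0)"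
      unfolding ip_fam uj vk base_def bS_def bA_def by (simp only: sum.case ssum_bT)
    also have "\<dots> = GG u v" unfolding GG_def uj vk by simp
    finally show ?thesis .
  next
    fix j k assume uj: "u = Inr j" and vk: "v = Inl k"
    have "ip NN (fam u) (fam v) = (\<Sum>b\<in>DD. \<Sum>c\<in>DD-{b}. \<Sum>a\<in>DD-{b,c}. (del j b - del j c) * 0 + 0 * (del k b + del k c) + 0 * 0)"
      unfolding ip_fam uj vk base_def bS_def bA_def by (simp only: sum.case ssum_bT)
    also have "\<dots> = GG u v" unfolding GG_def uj vk by simp
    finally show ?thesis .
  next
    fix j k assume uj: "u = Inr j" and vk: "v = Inr k"
    have j: "j \<in> DD" and k: "k \<in> DD" using u v uj vk unfolding K2_def by auto
    have "ip NN (fam u) (fam v) = (\<Sum>b\<in>DD. \<Sum>c\<in>DD-{b}. \<Sum>a\<in>DD-{b,c}. (del j b - del j c) * (del k b - del k c) + 0 * 0 + 0 * 0)"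
      unfolding ip_fam uj vk base_def bA_def by (simp only: sum.case ssum_bT)
    also have "\<dots> = (\<Sum>b\<in>DD. \<Sum>c\<in>DD-{b}. (real n - 2) * ((del j b - del j c) * (del k b - del k c)))"
      by (intro sum.cong refl) (simp add: sum_a_const)
    also have "\<dots> = (real n - 2) * (\<Sum>b\<in>DD. \<Sum>c\<in>DD-{b}. (del j b - del j c) * (del k b - del k c))"
      by (simp add: sum_distrib_left)
    also have "\<dots> = GG u v" unfolding psA[OF j k] GG_def uj vk by simp
    finally show ?thesis .
  qed
qed

end

context alg begin

definition HH :: "nat + nat \<Rightarrow> nat + nat \<Rightarrow> real" where
  "HH u v = (case (u, v) of (Inl j, Inl k) \<Rightarrow> (del j k - 1 / (2 * (real n - 1))) / (2 * (real n - 2)^2)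
     | (Inr j, Inr k) \<Rightarrow> del j k / (2 * real n * (real n - 2)) | _ \<Rightarrow> 0)"

definition HGv :: "nat + nat \<Rightarrow> nat + nat \<Rightarrow> real" where
  "HGv u v = (case (u, v) of (Inl j, Inl k) \<Rightarrow> del j k | (Inr j, Inr k) \<Rightarrow> del j k - 1 / real n | _ \<Rightarrow> 0)"

lemma aux_t: "(t::real) \<noteq> 0 \<Longrightarrow> x / (2 * t^2) * (t * y) = 1 / (2 * t) * (x * y)"
  by (simp add: power2_eq_square)

lemma del_sym: "del j k = del k j" unfolding del_def by auto

lemma sum_dd: "k \<in> DD \<Longrightarrow> (\<Sum>l\<in>DD. del k l * del l u) = del k u"
proof -
  assume k: "k \<in> DD"
  have "(\<Sum>l\<in>DD. del k l * del l u) = (\<Sum>l\<in>DD. if l = k then del k u else 0)"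
    by (intro sum.cong refl) (auto simp: del_def)
  then show ?thesis using k by simp
qed

lemma sum_d1: "k \<in> DD \<Longrightarrow> (\<Sum>l\<in>DD. del k l) = 1"
proof -
  assume k: "k \<in> DD"
  have "(\<Sum>l\<in>DD. del k l) = (\<Sum>l\<in>DD. if l = k then 1 else 0)"
    by (intro sum.cong refl) (auto simp: del_def)
  then show ?thesis using k by simp
qed

lemma sum_d2: "u \<in> DD \<Longrightarrow> (\<Sum>l\<in>DD. del l u) = 1"
proof -
  assume u: "u \<in> DD"
  have "(\<Sum>l\<in>DD. del l u) = (\<Sum>l\<in>DD. del u l)" by (intro sum.cong refl) (rule del_sym)
  then show ?thesis using sum_d1[OF u] by simp
qed

lemma HG: "k \<in> K2 \<Longrightarrow> u \<in> K2 \<Longrightarrow> (\<Sum>l\<in>K2. HH k l * GG l u) = HGv k u"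
proof -
  assume kK: "k \<in> K2" and uK: "u \<in> K2"
  have N: "(4::real) \<le> real n" by (rule n_ge)
  show ?thesis
  proof (cases k; cases u)
    fix k0 u0 assume kk0: "k = Inl k0" and uu0: "u = Inl u0"
    have k0: "k0 \<in> DD" and u0: "u0 \<in> DD" using kK uK kk0 uu0 unfolding K2_def by auto
    define A where "A = 1 / (2 * (real n - 2))"
    define B where "B = 1 / (2 * (real n - 1))"
    have nz: "real n - 2 \<noteq> 0" "real n - 1 \<noteq> 0" using N by auto
    have pt: "HH k (Inl l) * GG (Inl l) u = A * ((del k0 l - B) * (2 * (real n - 2) * del l u0 + 2))" for l
    proof -
      have "HH k (Inl l) * GG (Inl l) u = (del k0 l - B) / (2 * (real n - 2)^2) * ((real n - 2) * (2 * (real n - 2) * del l u0 + 2))"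
        unfolding HH_def GG_def kk0 uu0 B_def by simp
      also have "\<dots> = A * ((del k0 l - B) * (2 * (real n - 2) * del l u0 + 2))"
        unfolding A_def by (rule aux_t[OF nz(1)])
      finally show ?thesis .
    qed
    have pt2: "HH k (Inr l) * GG (Inr l) u = 0" for l unfolding HH_def GG_def kk0 uu0 by simp
    have ex: "(del k0 l - B) * (2 * (real n - 2) * del l u0 + 2) = 2 * (real n - 2) * (del k0 l * del l u0) + 2 * del k0 l - (2 * (real n - 2) * B) * del l u0 - 2 * B" for l
      by (simp add: algebra_simps)
    have "(\<Sum>l\<in>DD. (del k0 l - B) * (2 * (real n - 2) * del l u0 + 2))
       = 2 * (real n - 2) * (\<Sum>l\<in>DD. del k0 l * del l u0) + 2 * (\<Sum>l\<in>DD. del k0 l) - (2 * (real n - 2) * B) * (\<Sum>l\<in>DD. del l u0) - (\<Sum>l\<in>DD. 2 * B)"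
      unfolding ex by (simp only: sum.distrib sum_subtractf sum_distrib_left)
    also have "\<dots> = 2 * (real n - 2) * del k0 u0 + 2 - 2 * (real n - 2) * B - 2 * B * real n"
      unfolding sum_dd[OF k0] sum_d1[OF k0] sum_d2[OF u0] by simp
    finally have sm: "(\<Sum>l\<in>DD. (del k0 l - B) * (2 * (real n - 2) * del l u0 + 2)) = 2 * (real n - 2) * del k0 u0 + 2 - 2 * (real n - 2) * B - 2 * B * real n" .
    have "(\<Sum>l\<in>K2. HH k l * GG l u) = A * (2 * (real n - 2) * del k0 u0 + 2 - 2 * (real n - 2) * B - 2 * B * real n)"
      unfolding sum_K2 pt pt2 sm[symmetric] by (simp add: sum_distrib_left)
    also have "\<dots> = HGv k u"
    proof -
      have z: "2 - 2 * (real n - 2) * B - 2 * B * real n = 0" unfolding B_def using nz by (simp add: field_simps)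
      have "A * (2 * (real n - 2) * del k0 u0 + 2 - 2 * (real n - 2) * B - 2 * B * real n) = A * (2 * (real n - 2) * del k0 u0 + (2 - 2 * (real n - 2) * B - 2 * B * real n))"
        by (simp add: algebra_simps)
      also have "\<dots> = A * (2 * (real n - 2) * del k0 u0)" unfolding z by simp
      also have "\<dots> = del k0 u0" unfolding A_def using nz by simp
      finally show ?thesis unfolding HGv_def kk0 uu0 by simp
    qed
    finally show ?thesis .
  next
    fix k0 u0 assume kk0: "k = Inl k0" and uu0: "u = Inr u0"
    show ?thesis unfolding sum_K2 HH_def GG_def HGv_def kk0 uu0 by simp
  next
    fix k0 u0 assume kk0: "k = Inr k0" and uu0: "u = Inl u0"
    show ?thesis unfolding sum_K2 HH_def GG_def HGv_def kk0 uu0 by simp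
  next
    fix k0 u0 assume kk0: "k = Inr k0" and uu0: "u = Inr u0"
    have k0: "k0 \<in> DD" and u0: "u0 \<in> DD" using kK uK kk0 uu0 unfolding K2_def by auto
    have pt: "HH k (Inr l) * GG (Inr l) u = (del k0 l * del l u0) - del k0 l / real n" for l
      unfolding HH_def GG_def kk0 uu0 using N by (simp add: field_simps)
    have pt2: "HH k (Inl l) * GG (Inl l) u = 0" for l unfolding HH_def GG_def kk0 uu0 by simp
    have "(\<Sum>l\<in>K2. HH k l * GG l u) = (\<Sum>l\<in>DD. 0) + (\<Sum>l\<in>DD. del k0 l * del l u0 - del k0 l / real n)"
      unfolding sum_K2 pt pt2 ..
    also have "\<dots> = (\<Sum>l\<in>DD. del k0 l * del l u0) - (\<Sum>l\<in>DD. del k0 l) / real n"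
      by (simp only: sum_subtractf sum_divide_distrib sum.neutral_const add_0_left)
    also have "\<dots> = del k0 u0 - 1 / real n" unfolding sum_dd[OF k0] sum_d1[OF k0] ..
    finally have "(\<Sum>l\<in>K2. HH k l * GG l u) = del k0 u0 - 1 / real n" .
    also have "\<dots> = HGv k u" unfolding HGv_def kk0 uu0 by simp
    finally show ?thesis .
  qed
qed

lemma sum_bA: "(\<Sum>k\<in>DD. bA k i a b c) = 0"
proof (cases "vt a b c")
  case True
  then have b: "b \<in> DD" and c: "c \<in> DD" unfolding vt_def by auto
  have "(\<Sum>k\<in>DD. bA k i a b c) = (\<Sum>k\<in>DD. if i = a then del k b - del k c else 0)"
    unfolding bA_def bT_def tri_def using True by (intro sum.cong refl) simp
  also have "\<dots> = (if i = a then (\<Sum>k\<in>DD. del k b) - (\<Sum>k\<in>DD. del k c) else 0)"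
    by (simp add: sum_subtractf)
  also have "\<dots> = 0" using sum_d2[OF b] sum_d2[OF c] by simp
  finally show ?thesis .
next
  case False
  then show ?thesis unfolding bA_def bT_def by simp
qed

lemma sum_famA: "(\<Sum>k\<in>DD. fam (Inr k) r) = 0"
proof (cases "r < NN")
  case True
  have "(\<Sum>k\<in>DD. fam (Inr k) r) = (\<Sum>k\<in>DD. bA k (dI r) (dA r) (dB r) (dC r)) * sg (dO r)"
    unfolding fam_def lv_def base_def using True by (simp add: sum_distrib_right)
  then show ?thesis using sum_bA by simp
next
  case False
  then show ?thesis unfolding fam_def lv_def by simp
qed

lemma FP: "u \<in> K2 \<Longrightarrow> (\<Sum>k\<in>K2. \<Sum>l\<in>K2. fam k r * HH k l * GG l u) = fam u r"
proof -
  assume uK: "u \<in> K2"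
  have "(\<Sum>k\<in>K2. \<Sum>l\<in>K2. fam k r * HH k l * GG l u) = (\<Sum>k\<in>K2. fam k r * (\<Sum>l\<in>K2. HH k l * GG l u))"
    by (simp add: sum_distrib_left mult.assoc)
  also have "\<dots> = (\<Sum>k\<in>K2. fam k r * HGv k u)"
    using HG uK by (intro sum.cong refl) simp
  also have "\<dots> = fam u r"
  proof (cases u)
    case (Inl u0)
    then have u0: "u0 \<in> DD" using uK unfolding K2_def by auto
    have "(\<Sum>k\<in>K2. fam k r * HGv k u) = (\<Sum>k\<in>DD. fam (Inl k) r * del k u0)"
      unfolding sum_K2 HGv_def Inl by simp
    also have "\<dots> = (\<Sum>k\<in>DD. if k = u0 then fam (Inl u0) r else 0)"
      by (intro sum.cong refl) (simp add: del_def)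
    finally have "(\<Sum>k\<in>K2. fam k r * HGv k u) = (\<Sum>k\<in>DD. if k = u0 then fam (Inl u0) r else 0)" .
    then show ?thesis using u0 Inl by simp
  next
    case (Inr u0)
    then have u0: "u0 \<in> DD" using uK unfolding K2_def by auto
    have "(\<Sum>k\<in>K2. fam k r * HGv k u) = (\<Sum>k\<in>DD. fam (Inr k) r * del k u0) - (\<Sum>k\<in>DD. fam (Inr k) r) / real n"
      unfolding sum_K2 HGv_def Inr by (simp add: algebra_simps sum_subtractf sum_divide_distrib)
    also have "(\<Sum>k\<in>DD. fam (Inr k) r * del k u0) = (\<Sum>k\<in>DD. if k = u0 then fam (Inr u0) r else 0)"
      by (intro sum.cong refl) (simp add: del_def)
    finally show ?thesis using u0 Inr sum_famA by simp
  qed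
  finally show ?thesis .
qed

definition "U2r = reflm NN K2 fam HH"

lemma U2_unit: "runit NN U2r"
  unfolding U2r_def
proof (rule refl_unit[OF K2_fin])
  show "\<And>k l. k \<in> K2 \<Longrightarrow> l \<in> K2 \<Longrightarrow> HH k l = HH l k"
    unfolding HH_def by (auto simp: del_sym split: sum.split)
  fix j r assume j: "j \<in> K2" and "r < NN"
  have "(\<Sum>k\<in>K2. \<Sum>l\<in>K2. fam k r * HH k l * ip NN (fam l) (fam j)) = (\<Sum>k\<in>K2. \<Sum>l\<in>K2. fam k r * HH k l * GG l j)"
    using gram j by (intro sum.cong refl) simp
  also have "\<dots> = fam j r" by (rule FP[OF j])
  finally show "(\<Sum>k\<in>K2. \<Sum>l\<in>K2. fam k r * HH k l * ip NN (fam l) (fam j)) = fam j r" .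
qed

end

context alg begin

lemma ssum_cmult: "ssum (\<lambda>i a b c. x * B i a b c) = x * ssum B"
  unfolding ssum_def by (simp add: sum_distrib_left)

lemma ssum_sum: "ssum (\<lambda>i a b c. \<Sum>u\<in>U. f u i a b c) = (\<Sum>u\<in>U. ssum (f u))"
  unfolding ssum_def by (simp add: sum.swap[of _ U])

lemma vecT_bT: "vecT 1 F1 F2 F3 i a b c ob = (if ob = 1 then bT F1 F2 F3 i a b c else 0)"
  unfolding vecT_def bT_def by simp

lemma ip_fam_F: "ip NN (fam u) (lv (vecT 1 F1 F2 F3)) = sg 1 * ssum (\<lambda>i a b c. base u i a b c * bT F1 F2 F3 i a b c)"
proof -
  have "ip NN (fam u) (lv (vecT 1 F1 F2 F3)) = ssum (\<lambda>i a b c. sg 1 * (base u i a b c * bT F1 F2 F3 i a b c))"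
    unfolding ip_fam_gen vecT_bT by (simp add: mult.left_commute)
  then show ?thesis by (simp only: ssum_cmult)
qed

lemma sg1_sq: "sg 1 * sg 1 = 1 / 2" unfolding sg_def by simp

lemma U2_bal:
  assumes "\<And>u. u \<in> K2 \<Longrightarrow> ip NN (fam u) v = 0" "r < NN"
  shows "rapp NN U2r v r = v r"
  unfolding U2r_def rapp_refl[OF assms(2)] using assms(1) by simp

lemma U2_rej:
  assumes B: "\<And>i a b c. bT F1 F2 F3 i a b c = (\<Sum>u\<in>K2. coef u * base u i a b c)"
    and r: "i < n1" "a < n1" "b < n1" "c < n1"
  shows "rapp NN U2r (lv (vecT 1 F1 F2 F3)) (enc i a b c 1) = 0"
proof -
  have r1: "(1::nat) < 2" by simp
  have ipl: "ip NN (fam l) (lv (vecT 1 F1 F2 F3)) = sg 1 * (\<Sum>u\<in>K2. coef u * GG l u)" if l: "l \<in> K2" for l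
  proof -
    have "ip NN (fam l) (lv (vecT 1 F1 F2 F3)) = sg 1 * ssum (\<lambda>i a b c. \<Sum>u\<in>K2. coef u * (base l i a b c * base u i a b c))"
      unfolding ip_fam_F B by (simp add: sum_distrib_left mult.left_commute)
    also have "\<dots> = sg 1 * (\<Sum>u\<in>K2. coef u * ssum (\<lambda>i a b c. base l i a b c * base u i a b c))"
      by (simp only: ssum_sum ssum_cmult)
    also have "\<dots> = sg 1 * (\<Sum>u\<in>K2. coef u * GG l u)"
      using gram[OF l] ip_fam by (intro arg_cong[where f="\<lambda>t. sg 1 * t"] sum.cong refl) simp
    finally show ?thesis .
  qed
  define R where "R = enc i a b c 1"
  have Rl: "R < NN" unfolding R_def using enc_lt[OF r r1] .
  have "(\<Sum>k\<in>K2. \<Sum>l\<in>K2. fam k R * HH k l * ip NN (fam l) (lv (vecT 1 F1 F2 F3)))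
      = (\<Sum>k\<in>K2. \<Sum>l\<in>K2. fam k R * HH k l * (sg 1 * (\<Sum>u\<in>K2. coef u * GG l u)))"
    using ipl by (intro sum.cong refl) simp
  also have "\<dots> = sg 1 * (\<Sum>k\<in>K2. \<Sum>l\<in>K2. \<Sum>u\<in>K2. coef u * (fam k R * HH k l * GG l u))"
    by (simp only: sum_distrib_left mult_ac)
  also have "\<dots> = sg 1 * (\<Sum>u\<in>K2. \<Sum>k\<in>K2. \<Sum>l\<in>K2. coef u * (fam k R * HH k l * GG l u))"
    by (rule arg_cong[where f="\<lambda>t. sg 1 * t"], rule sum3_swap[symmetric])
  also have "\<dots> = sg 1 * (\<Sum>u\<in>K2. coef u * (\<Sum>k\<in>K2. \<Sum>l\<in>K2. fam k R * HH k l * GG l u))"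
    by (simp only: sum_distrib_left)
  also have "\<dots> = sg 1 * (\<Sum>u\<in>K2. coef u * fam u R)"
    using FP by (intro arg_cong[where f="\<lambda>t. sg 1 * t"] sum.cong refl) simp
  also have "\<dots> = sg 1 * (\<Sum>u\<in>K2. coef u * (base u i a b c * sg 1))"
    unfolding R_def fam_def lv_enc[OF r r1] ..
  also have "\<dots> = (sg 1 * sg 1) * bT F1 F2 F3 i a b c"
    unfolding B by (simp add: sum_distrib_left sum_distrib_right mult.assoc mult.left_commute mult.commute)
  finally have e: "(\<Sum>k\<in>K2. \<Sum>l\<in>K2. fam k R * HH k l * ip NN (fam l) (lv (vecT 1 F1 F2 F3))) = bT F1 F2 F3 i a b c / 2"
    unfolding sg1_sq by simp
  show ?thesis
    unfolding U2r_def R_def[symmetric] rapp_refl[OF Rl] e unfolding R_def lv_enc[OF r r1] vecT_bT by simp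
qed

end

context alg begin

lemma pd1: "j \<in> DD \<Longrightarrow> (\<Sum>b\<in>DD. \<Sum>c\<in>DD-{b}. del j b * h b c) = (\<Sum>c\<in>DD-{j}. h j c)"
proof -
  assume j: "j \<in> DD"
  have "(\<Sum>b\<in>DD. \<Sum>c\<in>DD-{b}. del j b * h b c) = (\<Sum>b\<in>DD. if b = j then (\<Sum>c\<in>DD-{j}. h j c) else 0)"
    by (intro sum.cong refl) (simp add: del_def)
  then show ?thesis using j by simp
qed

lemma pd2: "j \<in> DD \<Longrightarrow> (\<Sum>b\<in>DD. \<Sum>c\<in>DD-{b}. del j c * h b c) = (\<Sum>b\<in>DD-{j}. h b j)"
proof -
  assume j: "j \<in> DD"
  have "(\<Sum>b\<in>DD. \<Sum>c\<in>DD-{b}. del j c * h b c) = (\<Sum>b\<in>DD. if b \<noteq> j then h b j else 0)"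
  proof (intro sum.cong refl)
    fix b assume b: "b \<in> DD"
    have "(\<Sum>c\<in>DD-{b}. del j c * h b c) = (\<Sum>c\<in>DD-{b}. if c = j then h b j else 0)"
      by (intro sum.cong refl) (simp add: del_def)
    also have "\<dots> = (if b \<noteq> j then h b j else 0)" using j by auto
    finally show "(\<Sum>c\<in>DD-{b}. del j c * h b c) = (if b \<noteq> j then h b j else 0)" .
  qed
  also have "\<dots> = (\<Sum>b\<in>{b\<in>DD. b \<noteq> j}. h b j)" by (rule sum_if_set) simp
  also have "\<dots> = (\<Sum>b\<in>DD-{j}. h b j)" by (rule sum.cong) auto
  finally show ?thesis .
qed

lemma zz_cases: "zz x i = 1 \<or> zz x i = -1" unfolding zz_def by simp

lemma sum_z_diff1: "j \<in> DD \<Longrightarrow> (\<Sum>c\<in>DD-{j}. zz x c) = (\<Sum>c\<in>DD. zz x c) - zz x j"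
  by (simp add: sum_diff1)

lemma sum_z_diff2: "b \<in> DD \<Longrightarrow> c \<in> DD - {b} \<Longrightarrow> (\<Sum>a\<in>DD-{b,c}. zz x a) = (\<Sum>a\<in>DD. zz x a) - zz x b - zz x c"
proof -
  assume b: "b \<in> DD" and c: "c \<in> DD - {b}"
  have "DD - {b, c} = (DD - {b}) - {c}" by auto
  then show ?thesis using b c by (simp add: sum_diff1)
qed

lemma FL_bT: "FL x = vecT 1 (\<lambda>a b c. kk * pp * qq * zz x a * (zz x b - zz x c)) (\<lambda>a b c. kk * (pp^2 + qq^2 * zz x b * zz x c)) (\<lambda>_ _ _. 0)"
  unfolding FL_def ..

lemma bal_orth:
  assumes bal: "(\<Sum>i\<in>DD. zz x i) = 0" and u: "u \<in> K2"
  shows "ip NN (fam u) (lv (FL x)) = 0"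
proof (cases u)
  case (Inl j)
  then have j: "j \<in> DD" using u unfolding K2_def by auto
  let ?h = "\<lambda>b c. kk * (pp^2 + qq^2 * zz x b * zz x c)"
  have "ssum (\<lambda>i a b c. base u i a b c * bT (\<lambda>a b c. kk * pp * qq * zz x a * (zz x b - zz x c)) (\<lambda>a b c. kk * (pp^2 + qq^2 * zz x b * zz x c)) (\<lambda>_ _ _. 0) i a b c)
     = (\<Sum>b\<in>DD. \<Sum>c\<in>DD-{b}. \<Sum>a\<in>DD-{b,c}. 0 * (kk * pp * qq * zz x a * (zz x b - zz x c)) + (del j b + del j c) * ?h b c + 0 * 0)"
    unfolding Inl base_def bS_def by (simp only: sum.case ssum_bT)
  also have "\<dots> = (real n - 2) * ((\<Sum>b\<in>DD. \<Sum>c\<in>DD-{b}. del j b * ?h b c) + (\<Sum>b\<in>DD. \<Sum>c\<in>DD-{b}. del j c * ?h b c))"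
  proof -
    have "(\<Sum>b\<in>DD. \<Sum>c\<in>DD-{b}. \<Sum>a\<in>DD-{b,c}. 0 * (kk * pp * qq * zz x a * (zz x b - zz x c)) + (del j b + del j c) * ?h b c + 0 * 0)
      = (\<Sum>b\<in>DD. \<Sum>c\<in>DD-{b}. (real n - 2) * (del j b * ?h b c + del j c * ?h b c))"
      by (intro sum.cong refl) (simp add: sum_a_const algebra_simps)
    also have "\<dots> = (real n - 2) * (\<Sum>b\<in>DD. \<Sum>c\<in>DD-{b}. (del j b * ?h b c + del j c * ?h b c))"
      by (simp only: sum_distrib_left)
    also have "\<dots> = (real n - 2) * ((\<Sum>b\<in>DD. \<Sum>c\<in>DD-{b}. del j b * ?h b c) + (\<Sum>b\<in>DD. \<Sum>c\<in>DD-{b}. del j c * ?h b c))"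
      by (simp only: sum.distrib)
    finally show ?thesis .
  qed
  also have "(\<Sum>b\<in>DD. \<Sum>c\<in>DD-{b}. del j b * ?h b c) = 0"
  proof -
    have "(\<Sum>b\<in>DD. \<Sum>c\<in>DD-{b}. del j b * ?h b c) = (\<Sum>c\<in>DD-{j}. ?h j c)" by (rule pd1[OF j])
    also have "\<dots> = kk * ((real n - 1) * pp^2 + qq^2 * zz x j * (\<Sum>c\<in>DD-{j}. zz x c))"
      using j by (simp add: sum.distrib sum_distrib_left rn2 algebra_simps)
    also have "\<dots> = kk * ((real n - 1) * pp^2 - qq^2)" unfolding sum_z_diff1[OF j] bal using zz_sq[of x j] by (simp add: algebra_simps)
    also have "\<dots> = 0" unfolding pp2 qq2 using n_ge by (simp add: field_simps)
    finally show ?thesis .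
  qed
  also have "(\<Sum>b\<in>DD. \<Sum>c\<in>DD-{b}. del j c * ?h b c) = 0"
  proof -
    have "(\<Sum>b\<in>DD. \<Sum>c\<in>DD-{b}. del j c * ?h b c) = (\<Sum>b\<in>DD-{j}. ?h b j)" by (rule pd2[OF j])
    also have "\<dots> = kk * ((real n - 1) * pp^2 + qq^2 * zz x j * (\<Sum>b\<in>DD-{j}. zz x b))"
      using j by (simp add: sum.distrib sum_distrib_left sum_distrib_right rn2 algebra_simps)
    also have "\<dots> = kk * ((real n - 1) * pp^2 - qq^2)" unfolding sum_z_diff1[OF j] bal using zz_sq[of x j] by (simp add: algebra_simps)
    also have "\<dots> = 0" unfolding pp2 qq2 using n_ge by (simp add: field_simps)
    finally show ?thesis .
  qed
  finally show ?thesis unfolding FL_bT ip_fam_F by simp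
next
  case (Inr j)
  have "ssum (\<lambda>i a b c. base u i a b c * bT (\<lambda>a b c. kk * pp * qq * zz x a * (zz x b - zz x c)) (\<lambda>a b c. kk * (pp^2 + qq^2 * zz x b * zz x c)) (\<lambda>_ _ _. 0) i a b c)
     = (\<Sum>b\<in>DD. \<Sum>c\<in>DD-{b}. \<Sum>a\<in>DD-{b,c}. (del j b - del j c) * (kk * pp * qq * zz x a * (zz x b - zz x c)) + 0 * (kk * (pp^2 + qq^2 * zz x b * zz x c)) + 0 * 0)"
    unfolding Inr base_def bA_def by (simp only: sum.case ssum_bT)
  also have "\<dots> = (\<Sum>b\<in>DD. \<Sum>c\<in>DD-{b}. 0)"
  proof (intro sum.cong refl)
    fix b c assume b: "b \<in> DD" and c: "c \<in> DD - {b}"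
    have "(\<Sum>a\<in>DD-{b,c}. (del j b - del j c) * (kk * pp * qq * zz x a * (zz x b - zz x c)) + 0 * (kk * (pp^2 + qq^2 * zz x b * zz x c)) + 0 * 0)
       = (del j b - del j c) * (kk * pp * qq) * (zz x b - zz x c) * (\<Sum>a\<in>DD-{b,c}. zz x a)"
    proof -
      have pw: "(del j b - del j c) * (kk * pp * qq * zz x a * (zz x b - zz x c)) + 0 * (kk * (pp^2 + qq^2 * zz x b * zz x c)) + 0 * 0
          = ((del j b - del j c) * (kk * pp * qq) * (zz x b - zz x c)) * zz x a" for a
        by (simp add: algebra_simps)
      show ?thesis unfolding pw by (simp only: sum_distrib_left)
    qed
    also have "\<dots> = (del j b - del j c) * (kk * pp * qq) * ((zz x c * zz x c) - (zz x b * zz x b))"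
      unfolding sum_z_diff2[OF b c] bal by (simp add: algebra_simps)
    also have "\<dots> = 0" by (simp add: zz_sq)
    finally show "(\<Sum>a\<in>DD-{b,c}. (del j b - del j c) * (kk * pp * qq * zz x a * (zz x b - zz x c)) + 0 * (kk * (pp^2 + qq^2 * zz x b * zz x c)) + 0 * 0) = 0" .
  qed
  finally show ?thesis unfolding FL_bT ip_fam_F by simp
qed

lemma bT_decomp:
  assumes f1: "\<And>a b c. vt a b c \<Longrightarrow> F1 a b c = (\<Sum>j\<in>DD. cA j * (del j b - del j c))"
    and f2: "\<And>a b c. vt a b c \<Longrightarrow> F2 a b c = (\<Sum>j\<in>DD. cS j * (del j b + del j c))"
    and f3: "\<And>a b c. F3 a b c = 0"
  shows "bT F1 F2 F3 i a b c = (\<Sum>u\<in>K2. (case u of Inl j \<Rightarrow> cS j | Inr j \<Rightarrow> cA j) * base u i a b c)"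
proof (cases "vt a b c")
  case True
  then have d: "a \<noteq> b" "a \<noteq> c" "b \<noteq> c" unfolding vt_def by auto
  have "(\<Sum>u\<in>K2. (case u of Inl j \<Rightarrow> cS j | Inr j \<Rightarrow> cA j) * base u i a b c)
     = (\<Sum>j\<in>DD. cS j * bS j i a b c) + (\<Sum>j\<in>DD. cA j * bA j i a b c)"
    unfolding sum_K2 base_def by simp
  also have "\<dots> = (\<Sum>j\<in>DD. cS j * tri 0 (del j b + del j c) 0 a b c i) + (\<Sum>j\<in>DD. cA j * tri (del j b - del j c) 0 0 a b c i)"
    unfolding bS_def bA_def bT_def using True by simp
  also have "\<dots> = bT F1 F2 F3 i a b c"
    unfolding bT_def tri_def using True d f1[OF True] f2[OF True] f3
    by (auto simp: sum_distrib_left[symmetric] if_distrib cong: if_cong)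
  finally show ?thesis ..
next
  case False
  then show ?thesis unfolding sum_K2 base_def bS_def bA_def bT_def by simp
qed

end

lemma hw_cons: "hamming_weight (a # x) = (if a then 1 else 0) + hamming_weight x"
  unfolding hamming_weight_def by simp

lemma sum_sign_list: "(\<Sum>k<length x. (if x ! k then -1 else 1::real)) = real (length x) - 2 * real (hamming_weight x)"
proof (induction x)
  case Nil
  then show ?case by (simp add: hamming_weight_def)
next
  case (Cons a x)
  have "(\<Sum>k<length (a # x). (if (a # x) ! k then -1 else 1::real)) = (if a then -1 else 1) + (\<Sum>k<length x. (if x ! k then -1 else 1::real))"
    by (simp add: sum.lessThan_Suc_shift)
  then show ?case using Cons by (simp add: hw_cons)
qed

lemma hw_card: "hamming_weight x = card {k. k < length x \<and> x ! k}"
  unfolding hamming_weight_def using length_filter_conv_card[of id x] by simp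

context alg begin

lemma zz_Suc: "zz x (Suc k) = (if x ! k then -1 else 1)" unfolding zz_def xbit_def by simp

lemma sum_zz: "length x = n \<Longrightarrow> (\<Sum>i\<in>DD. zz x i) = real n - 2 * real (hamming_weight x)"
proof -
  assume l: "length x = n"
  have "(\<Sum>i\<in>DD. zz x i) = (\<Sum>k<n. zz x (Suc k))"
    using sum.atLeast1_atMost_eq[of "zz x" n] by simp
  also have "\<dots> = (\<Sum>k<length x. (if x ! k then -1 else 1::real))" unfolding zz_Suc l ..
  finally show ?thesis using sum_sign_list[of x] unfolding l by simp
qed

lemma bal_sum:
  assumes "even n" "length x = n" "hamming_weight x = n div 2"
  shows "(\<Sum>i\<in>DD. zz x i) = 0"
proof -
  have "real n = 2 * real (n div 2)" using assms(1) by (auto elim: evenE)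
  then show ?thesis using sum_zz[OF assms(2)] assms(3) by simp
qed

lemma one_pos:
  assumes "card {k. k < n \<and> P k} = 1"
  shows "\<exists>k0<n. \<forall>k<n. P k \<longleftrightarrow> k = k0"
proof -
  obtain k0 where "{k. k < n \<and> P k} = {k0}" using assms card_1_singleton_iff[of "{k. k < n \<and> P k}"] by auto
  then show ?thesis by (metis (mono_tags, lifting) insertI1 mem_Collect_eq singletonD)
qed

lemma rej_form:
  assumes l: "length x = n" and hw: "hamming_weight x \<in> {0, 1, n - 1, n}"
  shows "\<exists>\<epsilon>. \<epsilon> * \<epsilon> = (1::real) \<and> ((\<forall>i\<in>DD. zz x i = \<epsilon>) \<or> (\<exists>j0\<in>DD. \<forall>i\<in>DD. zz x i = \<epsilon> * (1 - 2 * del j0 i)))"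
proof -
  have zi: "zz x i = (if x ! (i - 1) then -1 else 1)" if "i \<in> DD" for i
    using that zz_Suc[of x "i - 1"] by simp
  have hc: "hamming_weight x = card {k. k < n \<and> x ! k}" using hw_card l by simp
  have hn: "card {k. k < n \<and> \<not> x ! k} = n - hamming_weight x"
  proof -
    have "length (filter (\<lambda>b. \<not> id b) x) = n - hamming_weight x"
      using sum_length_filter_compl[of id x] l unfolding hamming_weight_def by simp
    then show ?thesis using length_filter_conv_card[of "\<lambda>b. \<not> id b" x] l by simp
  qed
  consider "hamming_weight x = 0" | "hamming_weight x = 1" | "hamming_weight x = n - 1" | "hamming_weight x = n"
    using hw by auto
  then show ?thesis
  proof cases
    case 1
    then have "{k. k < n \<and> x ! k} = {}" using hc by simp
    then have "\<forall>i\<in>DD. zz x i = 1" using zi by fastforce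
    then show ?thesis by (intro exI[of _ 1]) auto
  next
    case 4
    then have "card {k. k < n \<and> \<not> x ! k} = 0" using hn by simp
    then have "{k. k < n \<and> \<not> x ! k} = {}" by simp
    then have "\<forall>i\<in>DD. zz x i = -1" using zi by fastforce
    then show ?thesis by (intro exI[of _ "-1"]) auto
  next
    case 2
    then obtain k0 where k0: "k0 < n" "\<forall>k<n. x ! k \<longleftrightarrow> k = k0" using one_pos hc by metis
    have "\<forall>i\<in>DD. zz x i = 1 * (1 - 2 * del (Suc k0) i)"
    proof
      fix i assume i: "i \<in> DD"
      then have "i - 1 < n" by auto
      then show "zz x i = 1 * (1 - 2 * del (Suc k0) i)" using zi[OF i] k0 i unfolding del_def by auto
    qed
    moreover have "Suc k0 \<in> DD" using k0 by simp
    ultimately show ?thesis by (intro exI[of _ 1]) auto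
  next
    case 3
    then have "card {k. k < n \<and> \<not> x ! k} = 1" using hn n4 by simp
    then obtain k0 where k0: "k0 < n" "\<forall>k<n. \<not> x ! k \<longleftrightarrow> k = k0" using one_pos by metis
    have "\<forall>i\<in>DD. zz x i = -1 * (1 - 2 * del (Suc k0) i)"
    proof
      fix i assume i: "i \<in> DD"
      then have "i - 1 < n" by auto
      then show "zz x i = -1 * (1 - 2 * del (Suc k0) i)" using zi[OF i] k0 i unfolding del_def by auto
    qed
    moreover have "Suc k0 \<in> DD" using k0 by simp
    ultimately show ?thesis by (intro exI[of _ "-1"]) auto
  qed
qed

lemma rej_decomp:
  assumes e: "\<epsilon> * \<epsilon> = (1::real)" and form: "(\<forall>i\<in>DD. zz x i = \<epsilon>) \<or> (\<exists>j0\<in>DD. \<forall>i\<in>DD. zz x i = \<epsilon> * (1 - 2 * del j0 i))"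
  shows "\<exists>coef. \<forall>i a b c. bT (\<lambda>a b c. kk * pp * qq * zz x a * (zz x b - zz x c)) (\<lambda>a b c. kk * (pp^2 + qq^2 * zz x b * zz x c)) (\<lambda>_ _ _. 0) i a b c
          = (\<Sum>u\<in>K2. coef u * base u i a b c)"
  using form
proof
  assume c1: "\<forall>i\<in>DD. zz x i = \<epsilon>"
  show ?thesis
  proof (intro exI allI, rule bT_decomp[where cA="\<lambda>_. 0" and cS="\<lambda>_. kk / 2"])
    fix a b c assume v: "vt a b c"
    then have b: "b \<in> DD" and c: "c \<in> DD" unfolding vt_def by auto
    show "kk * pp * qq * zz x a * (zz x b - zz x c) = (\<Sum>j\<in>DD. 0 * (del j b - del j c))"
      using c1 b c by simp
    have "(\<Sum>j\<in>DD. kk / 2 * (del j b + del j c)) = kk / 2 * ((\<Sum>j\<in>DD. del j b) + (\<Sum>j\<in>DD. del j c))"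
      by (simp only: sum_distrib_left sum.distrib distrib_left)
    also have "\<dots> = kk" unfolding sum_d2[OF b] sum_d2[OF c] by simp
    finally show "kk * (pp^2 + qq^2 * zz x b * zz x c) = (\<Sum>j\<in>DD. kk / 2 * (del j b + del j c))"
      using c1 b c e ppqq by (simp add: mult.assoc)
  qed simp
next
  assume "\<exists>j0\<in>DD. \<forall>i\<in>DD. zz x i = \<epsilon> * (1 - 2 * del j0 i)"
  then obtain j0 where j0: "j0 \<in> DD" and c2: "\<forall>i\<in>DD. zz x i = \<epsilon> * (1 - 2 * del j0 i)" by blast
  show ?thesis
  proof (intro exI allI, rule bT_decomp[where cA="\<lambda>j. -2 * kk * pp * qq * del j0 j" and cS="\<lambda>j. kk / 2 - 2 * kk * qq^2 * del j0 j"])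
    fix a b c assume v: "vt a b c"
    then have a: "a \<in> DD" and b: "b \<in> DD" and c: "c \<in> DD" and d: "a \<noteq> b" "a \<noteq> c" "b \<noteq> c" unfolding vt_def by auto
    have "(\<Sum>j\<in>DD. -2 * kk * pp * qq * del j0 j * (del j b - del j c))
       = -2 * kk * pp * qq * ((\<Sum>j\<in>DD. del j0 j * del j b) - (\<Sum>j\<in>DD. del j0 j * del j c))"
    proof -
      have pw: "-2 * kk * pp * qq * del j0 j * (del j b - del j c) = (-2 * kk * pp * qq) * (del j0 j * del j b) - (-2 * kk * pp * qq) * (del j0 j * del j c)" for j
        by (simp add: algebra_simps)
      show ?thesis unfolding pw by (simp only: sum_subtractf sum_distrib_left[symmetric] right_diff_distrib)
    qed
    also have "\<dots> = -2 * kk * pp * qq * (del j0 b - del j0 c)" unfolding sum_dd[OF j0] ..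
    finally have s1: "(\<Sum>j\<in>DD. -2 * kk * pp * qq * del j0 j * (del j b - del j c)) = -2 * kk * pp * qq * (del j0 b - del j0 c)" .
    have za: "zz x a = \<epsilon> * (1 - 2 * del j0 a)" using c2 a by blast
    have zb: "zz x b = \<epsilon> * (1 - 2 * del j0 b)" using c2 b by blast
    have zc: "zz x c = \<epsilon> * (1 - 2 * del j0 c)" using c2 c by blast
    have "zz x a * (zz x b - zz x c) = (\<epsilon> * \<epsilon>) * ((1 - 2 * del j0 a) * ((1 - 2 * del j0 b) - (1 - 2 * del j0 c)))"
      unfolding za zb zc by (simp add: algebra_simps)
    also have "\<dots> = -2 * (del j0 b - del j0 c)" unfolding e using d unfolding del_def by auto
    finally have z1: "zz x a * (zz x b - zz x c) = -2 * (del j0 b - del j0 c)" .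
    show "kk * pp * qq * zz x a * (zz x b - zz x c) = (\<Sum>j\<in>DD. -2 * kk * pp * qq * del j0 j * (del j b - del j c))"
    proof -
      have "kk * pp * qq * zz x a * (zz x b - zz x c) = kk * pp * qq * (zz x a * (zz x b - zz x c))" by (simp add: mult.assoc)
      also have "\<dots> = -2 * kk * pp * qq * (del j0 b - del j0 c)" unfolding z1 by (simp add: algebra_simps)
      finally show ?thesis unfolding s1 .
    qed
    have "(\<Sum>j\<in>DD. (kk / 2 - 2 * kk * qq^2 * del j0 j) * (del j b + del j c))
       = kk / 2 * ((\<Sum>j\<in>DD. del j b) + (\<Sum>j\<in>DD. del j c)) - 2 * kk * qq^2 * ((\<Sum>j\<in>DD. del j0 j * del j b) + (\<Sum>j\<in>DD. del j0 j * del j c))"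
      by (simp add: sum_distrib_left sum_subtractf sum.distrib algebra_simps)
    also have "\<dots> = kk - 2 * kk * qq^2 * (del j0 b + del j0 c)" unfolding sum_dd[OF j0] sum_d2[OF b] sum_d2[OF c] by simp
    finally have s2: "(\<Sum>j\<in>DD. (kk / 2 - 2 * kk * qq^2 * del j0 j) * (del j b + del j c)) = kk - 2 * kk * qq^2 * (del j0 b + del j0 c)" .
    have "zz x b * zz x c = (\<epsilon> * \<epsilon>) * ((1 - 2 * del j0 b) * (1 - 2 * del j0 c))"
      unfolding zb zc by (simp add: algebra_simps)
    also have "\<dots> = 1 - 2 * (del j0 b + del j0 c)" unfolding e using d unfolding del_def by auto
    finally have z2: "zz x b * zz x c = 1 - 2 * (del j0 b + del j0 c)" .
    have "kk * (pp^2 + qq^2 * zz x b * zz x c) = kk * (pp^2 + qq^2 * (zz x b * zz x c))" by (simp add: mult.assoc)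
    also have "\<dots> = kk - 2 * kk * qq^2 * (del j0 b + del j0 c)" unfolding z2 using ppqq by (simp add: algebra_simps)
    finally show "kk * (pp^2 + qq^2 * zz x b * zz x c) = (\<Sum>j\<in>DD. (kk / 2 - 2 * kk * qq^2 * del j0 j) * (del j b + del j c))"
      unfolding s2 .
  qed simp
qed

end

lemma apply_op_cpx: "apply_op N (\<lambda>r c. complex_of_real (A r c)) (\<lambda>c. complex_of_real (v c)) = (\<lambda>r. complex_of_real (rapp N A v r))"
  unfolding apply_op_def rapp_def by (rule ext) simp

lemma unitary_cpx: "runit N A \<Longrightarrow> unitary_op N (\<lambda>r c. complex_of_real (A r c))"
  unfolding unitary_op_def runit_def
proof (intro allI impI)
  fix j k assume A: "\<forall>j<N. \<forall>k<N. (\<Sum>l<N. A l j * A l k) = (if j = k then 1 else 0)" and j: "j < N" and k: "k < N"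
  have "(\<Sum>l<N. cnj (complex_of_real (A l j)) * complex_of_real (A l k)) = complex_of_real (\<Sum>l<N. A l j * A l k)"
    by simp
  also have "\<dots> = (if j = k then 1 else 0)" using A j k by simp
  finally show "(\<Sum>l<N. cnj (complex_of_real (A l j)) * complex_of_real (A l k)) = (if j = k then 1 else 0)" .
qed

definition Uc :: "(nat \<Rightarrow> nat \<Rightarrow> real) \<Rightarrow> nat \<Rightarrow> nat \<Rightarrow> complex" where
  "Uc A = (\<lambda>r c. complex_of_real (A r c))"

context alg begin

lemma query_cpx: "query_op n mm x (\<lambda>c. complex_of_real (v c)) = (\<lambda>k. complex_of_real (rquery x v k))"
  unfolding query_op_def rquery_def NN_def by (rule ext) simp

lemma init_cpx: "init_state = (\<lambda>k. complex_of_real (initr k))"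
  unfolding init_state_def initr_def by (rule ext) simp

definition "Gx x = rapp NN U2r (rquery x (rapp NN U1r (rquery x (rapp NN U0r initr))))"

lemma final_eq: "final_state n mm x (Uc U0r) [Uc U1r, Uc U2r] = (\<lambda>k. complex_of_real (Gx x k))"
  unfolding final_state_def Gx_def Uc_def NN_def[symmetric]
  by (simp add: init_cpx apply_op_cpx query_cpx)

lemma rquery_norm: "(\<Sum>k<NN. (rquery x v k)^2) = (\<Sum>k<NN. (v k)^2)"
  unfolding rquery_def by (intro sum.cong refl) simp

lemma init_norm: "(\<Sum>k<NN. (initr k)^2) = 1"
proof -
  have "(\<Sum>k<NN. (initr k)^2) = (\<Sum>k<NN. if k = 0 then 1 else 0)" unfolding initr_def by (intro sum.cong refl) simp
  then show ?thesis using NN_pos by simp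
qed

lemma Gx_norm: "(\<Sum>k<NN. (Gx x k)^2) = 1"
  unfolding Gx_def runit_norm[OF U2_unit] rquery_norm runit_norm[OF U1_unit] runit_norm[OF U0_unit] init_norm ..

lemma prob_eq: "prob_output n mm x (Uc U0r) [Uc U1r, Uc U2r] ob = (\<Sum>k | k < NN \<and> out_bit k = ob. (Gx x k)^2)"
  unfolding prob_output_def final_eq NN_def[symmetric] by (simp add: power2_abs)

lemma psum:
  fixes G :: "nat \<Rightarrow> real"
  assumes "\<And>k. k < NN \<Longrightarrow> out_bit k \<noteq> ob \<Longrightarrow> G k = 0"
  shows "(\<Sum>k | k < NN \<and> out_bit k = ob. (G k)^2) = (\<Sum>k<NN. (G k)^2)"
proof (rule sum.mono_neutral_left)
  show "finite {..<NN}" by simp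
  show "{k. k < NN \<and> out_bit k = ob} \<subseteq> {..<NN}" by auto
  show "\<forall>i\<in>{..<NN} - {k. k < NN \<and> out_bit k = ob}. (G i)^2 = 0"
  proof
    fix i assume "i \<in> {..<NN} - {k. k < NN \<and> out_bit k = ob}"
    then have "G i = 0" using assms by auto
    then show "(G i)^2 = 0" by simp
  qed
qed

lemma Gx_pre: "Gx x = rapp NN U2r (lv (FL x))" unfolding Gx_def pre_U2 ..

lemma bal_prob:
  assumes "even n" "length x = n" "hamming_weight x = n div 2"
  shows "prob_output n mm x (Uc U0r) [Uc U1r, Uc U2r] 1 = 1"
proof -
  have bs: "(\<Sum>i\<in>DD. zz x i) = 0" by (rule bal_sum[OF assms])
  have z: "Gx x k = 0" if k: "k < NN" and o: "out_bit k \<noteq> 1" for k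
  proof -
    have "Gx x k = lv (FL x) k" unfolding Gx_pre using U2_bal[OF bal_orth[OF bs] k] by simp
    also have "\<dots> = 0" unfolding lv_def FL_def vecT_def using k o unfolding dO_def by simp
    finally show ?thesis .
  qed
  show ?thesis using prob_eq psum[OF z] Gx_norm by simp
qed

lemma rej_prob:
  assumes "length x = n" "hamming_weight x \<in> {0, 1, n - 1, n}"
  shows "prob_output n mm x (Uc U0r) [Uc U1r, Uc U2r] 0 = 1"
proof -
  obtain \<epsilon> where e: "\<epsilon> * \<epsilon> = (1::real)" and form: "(\<forall>i\<in>DD. zz x i = \<epsilon>) \<or> (\<exists>j0\<in>DD. \<forall>i\<in>DD. zz x i = \<epsilon> * (1 - 2 * del j0 i))"
    using rej_form[OF assms] by blast
  obtain coef where cf: "\<And>i a b c. bT (\<lambda>a b c. kk * pp * qq * zz x a * (zz x b - zz x c)) (\<lambda>a b c. kk * (pp^2 + qq^2 * zz x b * zz x c)) (\<lambda>_ _ _. 0) i a b c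
          = (\<Sum>u\<in>K2. coef u * base u i a b c)"
    using rej_decomp[OF e form] by blast
  have z: "Gx x k = 0" if k: "k < NN" and o: "out_bit k \<noteq> 0" for k
  proof -
    have o1: "dO k = 1" using o enc_dec(6)[OF k] unfolding dO_def by simp
    have kk': "k = enc (dI k) (dA k) (dB k) (dC k) 1" using enc_dec(1)[OF k] o1 by simp
    have "Gx x k = rapp NN U2r (lv (FL x)) (enc (dI k) (dA k) (dB k) (dC k) 1)" unfolding Gx_pre using kk' by simp
    also have "\<dots> = 0" unfolding FL_def by (rule U2_rej[OF cf enc_dec(2-5)[OF k]])
    finally show ?thesis .
  qed
  show ?thesis using prob_eq psum[OF z] Gx_norm by simp
qed

end

theorem mainTheorem5:
  fixes n :: nat
  assumes "even n" and "n \<ge> 4"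
  shows "\<exists>(m::nat) U0 Us. m \<ge> 1 \<and> length Us = 2 \<and>
           unitary_op (qdim n m) U0 \<and> (\<forall>U \<in> set Us. unitary_op (qdim n m) U) \<and>
           (\<forall>x. length x = n \<and> hamming_weight x = n div 2 \<longrightarrow>
                prob_output n m x U0 Us 1 = 1) \<and>
           (\<forall>x. length x = n \<and> hamming_weight x \<in> {0, 1, n - 1, n} \<longrightarrow>
                prob_output n m x U0 Us 0 = 1)"
proof -
  interpret alg n using assms(2) by unfold_locales
  have u: "unitary_op (qdim n mm) (Uc U0r)" "unitary_op (qdim n mm) (Uc U1r)" "unitary_op (qdim n mm) (Uc U2r)"
    unfolding Uc_def NN_def[symmetric] using unitary_cpx U0_unit U1_unit U2_unit by auto
  have m: "mm \<ge> 1" using mm_pos by simp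
  show ?thesis
    apply (rule exI[of _ mm], rule exI[of _ "Uc U0r"], rule exI[of _ "[Uc U1r, Uc U2r]"])
    using u m bal_prob[OF assms(1)] rej_prob by auto
qed

end
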